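(* Let $\mathcal P$ be the partition of the unit sphere defined by four distinct great circles, no three of which have a common point, and let $F$ be a quadrilateral face of $\mathcal P$ with interior angles $\pi a,\pi b,\pi c,\pi d$ at its consecutive vertices. Then $$0<a,b,c,d<1,\qquad 0<a+b+c+d-2<2\min(a,b,c,d).$$ The subset of the unit cube in $\mathbb R^4$ defined by these inequalities is an open convex pyramid $\Pi$ with vertex $(1,1,1,1)$ whose base is the octahedron in the hyperplane $a+b+c+d=2$ with vertices $(0,0,1,1)$, $(0,1,0,1)$, $(0,1,1,0)$, $(1,0,0,1)$, $(1,0,1,0)$, $(1,1,0,0)$.
   Context: Four great circles in general position (distinct, no triple intersections) partition the unit sphere into 8 triangular and 6 quadrilateral faces; each quadrilateral face has its four sides on the four distinct circles. *)

theory Defs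
  imports "HOL-Analysis.Analysis"
begin

definition great_circle :: "(real^3) set \<Rightarrow> bool" where
  "great_circle K \<longleftrightarrow> (\<exists>n::real^3. n \<noteq> 0 \<and> K = {x \<in> sphere 0 1. n \<bullet> x = 0})"

definition general_position4 :: "(nat \<Rightarrow> (real^3) set) \<Rightarrow> bool" where
  "general_position4 C \<longleftrightarrow>
     (\<forall>i<4. great_circle (C i)) \<and> inj_on C {..<4} \<and>
     (\<forall>i<4. \<forall>j<4. \<forall>k<4. i \<noteq> j \<and> j \<noteq> k \<and> i \<noteq> k \<longrightarrow> C i \<inter> C j \<inter> C k = {})"

definition faces :: "(nat \<Rightarrow> (real^3) set) \<Rightarrow> (real^3) set set" where
  "faces C = components (sphere 0 1 - (\<Union>i<4. C i))"

definition face_vertices :: "(nat \<Rightarrow> (real^3) set) \<Rightarrow> (real^3) set \<Rightarrow> (real^3) set" where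
  "face_vertices C F = {v \<in> closure F. \<exists>i<4. \<exists>j<4. i \<noteq> j \<and> v \<in> C i \<and> v \<in> C j}"

definition side_dir :: "(nat \<Rightarrow> (real^3) set) \<Rightarrow> (real^3) set \<Rightarrow> real^3 \<Rightarrow> nat \<Rightarrow> real^3 \<Rightarrow> bool" where
  "side_dir C F v i u \<longleftrightarrow> v \<in> C i \<and> norm u = 1 \<and> u \<bullet> v = 0 \<and>
     (\<exists>e>0. \<forall>s. 0 < s \<and> s < e \<longrightarrow> cos s *\<^sub>R v + sin s *\<^sub>R u \<in> C i \<inter> closure F)"

definition interior_angle :: "(nat \<Rightarrow> (real^3) set) \<Rightarrow> (real^3) set \<Rightarrow> real^3 \<Rightarrow> real" where
  "interior_angle C F v = (THE \<theta>. \<exists>i<4. \<exists>j<4. \<exists>u w. i \<noteq> j \<and>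
      side_dir C F v i u \<and> side_dir C F v j w \<and> \<theta> = arccos (u \<bullet> w))"

end

theory Submission
  imports Defs
begin

unbundle cross3_syntax

lemma vector_4 [simp]:
 "(vector [a,b,c,d] ::('a::zero)^4)$1 = a"
 "(vector [a,b,c,d] ::('a::zero)^4)$2 = b"
 "(vector [a,b,c,d] ::('a::zero)^4)$3 = c"
 "(vector [a,b,c,d] ::('a::zero)^4)$4 = d"
  unfolding vector_def by simp_all

lemma absbound: fixes a b c d t :: real assumes "2*t = a+b+c+d-2" "t \<le> a" "t\<le>b" "t\<le>c" "t\<le>d" "a\<le>1" "b\<le>1" "c\<le>1" "d\<le>1"
 shows "\<bar>a+b-c-d\<bar> + \<bar>a+c-b-d\<bar> + \<bar>a+d-b-c\<bar> \<le> 2 - 2*t"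
  using assms by (simp add: abs_if) 

lemma hull_pts_sub:
  fixes p :: "real^4"
  assumes "\<forall>i. 0 < p$i \<and> p$i < 1" "0 < (\<Sum>i\<in>UNIV. p$i) - 2"
    "(\<Sum>i\<in>UNIV. p$i) - 2 < 2 * Min (range (\<lambda>i. p$i))"
  shows "p \<in> convex hull {vector [1,1,1,1], vector [0,0,1,1], vector [0,1,0,1],
             vector [0,1,1,0], vector [1,0,0,1], vector [1,0,1,0], vector [1,1,0,0]}"
proof -
  let ?P = "{vector [1,1,1,1], vector [0,0,1,1], vector [0,1,0,1],
             vector [0,1,1,0], vector [1,0,0,1], vector [1,0,1,0], vector [1,1,0,0]} :: (real^4) set"
  have rng: "range (\<lambda>i. p$i) = {p$1, p$2, p$3, p$4}" unfolding UNIV_4 by auto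
  have mn: "Min (range (\<lambda>i. p$i)) \<le> p$i" for i by (simp add: rng[symmetric])
  have sm: "(\<Sum>i\<in>UNIV. p$i) = p$1 + p$2 + p$3 + p$4" by (simp add: sum_4)
  define t where "t = (p$1 + p$2 + p$3 + p$4 - 2) / 2"
  define D1 where "D1 = (p$1 + p$2 - p$3 - p$4)"
  define D2 where "D2 = (p$1 + p$3 - p$2 - p$4)"
  define D3 where "D3 = (p$1 + p$4 - p$2 - p$3)"
  define A1 where "A1 = \<bar>D1\<bar>"
  define A2 where "A2 = \<bar>D2\<bar>"
  define A3 where "A3 = \<bar>D3\<bar>"
  define y where "y = (2 - 2*t - A1 - A2 - A3) / 12"
  have p1: "0 < p$1" "p$1 < 1" "0 < p$2" "p$2 < 1" "0 < p$3" "p$3 < 1" "0 < p$4" "p$4 < 1"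
    using assms(1) by auto
  have t0: "0 < t" using assms(2) sm t_def by simp
  have a3: "p$1 + p$2 + p$3 + p$4 - 2 < 2 * Min (range (\<lambda>i. p$i))" using assms(3) sm by simp
  have aux: "\<And>x m a::real. x - 2 < 2*m \<Longrightarrow> m \<le> a \<Longrightarrow> (x-2)/2 < a" by (simp add: field_simps)
  have ti1: "t < p$1" unfolding t_def by (rule aux[OF a3 mn])
  have ti2: "t < p$2" unfolding t_def by (rule aux[OF a3 mn])
  have ti3: "t < p$3" unfolding t_def by (rule aux[OF a3 mn])
  have ti4: "t < p$4" unfolding t_def by (rule aux[OF a3 mn])
  note ti = ti1 ti2 ti3 ti4
  have "2*t = p$1 + p$2 + p$3 + p$4 - 2" unfolding t_def by simp
  from absbound[OF this less_imp_le[OF ti1] less_imp_le[OF ti2] less_imp_le[OF ti3] less_imp_le[OF ti4]]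
  have y0: "0 \<le> y" unfolding y_def A1_def A2_def A3_def D1_def D2_def D3_def using p1 by simp
  define ys :: "nat \<Rightarrow> real^4" where "ys = (\<lambda>j. [vector [1,1,1,1], vector [1,1,0,0], vector [0,0,1,1],
      vector [1,0,1,0], vector [0,1,0,1], vector [1,0,0,1], vector [0,1,1,0]] ! j)"
  define cs :: "nat \<Rightarrow> real" where "cs = (\<lambda>j. [t, y + (A1 + D1)/4, y + (A1 - D1)/4,
      y + (A2 + D2)/4, y + (A2 - D2)/4, y + (A3 + D3)/4, y + (A3 - D3)/4] ! j)"
  have "(\<Sum>j\<in>{..<7}. cs j *\<^sub>R ys j) \<in> convex hull ?P"
  proof (rule convex_sum)
    show "sum cs {..<7} = 1" by (simp add: cs_def eval_nat_numeral y_def field_simps)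
    show "\<And>i. i \<in> {..<7} \<Longrightarrow> 0 \<le> cs i"
    proof -
      fix i assume "i \<in> {..<(7::nat)}"
      then have "i = 0 \<or> i = 1 \<or> i = 2 \<or> i = 3 \<or> i = 4 \<or> i = 5 \<or> i = 6" by auto
      then show "0 \<le> cs i" using t0 y0 by (auto simp: cs_def A1_def A2_def A3_def)
    qed
    show "\<And>i. i \<in> {..<7} \<Longrightarrow> ys i \<in> convex hull ?P"
    proof -
      fix i assume "i \<in> {..<(7::nat)}"
      then have "i = 0 \<or> i = 1 \<or> i = 2 \<or> i = 3 \<or> i = 4 \<or> i = 5 \<or> i = 6" by auto
      then have "ys i \<in> ?P" by (auto simp: ys_def)
      then show "ys i \<in> convex hull ?P" by (rule hull_inc)
    qed
  qed auto
  moreover have "(\<Sum>j\<in>{..<7}. cs j *\<^sub>R ys j) = p"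
    by (simp add: cs_def ys_def eval_nat_numeral vec_eq_iff forall_4 y_def t_def D1_def D2_def D3_def field_simps)
  ultimately show ?thesis by simp
qed

lemma sum_axis_add: "(\<Sum>j\<in>UNIV. (p + c *\<^sub>R axis i 1)$j) = (\<Sum>j\<in>UNIV. p$j) + (c::real)"
proof -
  have "(p + c *\<^sub>R axis i 1)$j = p$j + (if j = i then c else 0)" for j by (simp add: axis_def)
  then show ?thesis by (simp add: sum.distrib)
qed

lemma interior_hull_sub:
  fixes p :: "real^4"
  assumes "p \<in> interior (convex hull {vector [1,1,1,1], vector [0,0,1,1], vector [0,1,0,1],
             vector [0,1,1,0], vector [1,0,0,1], vector [1,0,1,0], vector [1,1,0,0]})"
  shows "(\<forall>i. 0 < p$i \<and> p$i < 1) \<and> 0 < (\<Sum>i\<in>UNIV. p$i) - 2 \<and>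
     (\<Sum>i\<in>UNIV. p$i) - 2 < 2 * Min (range (\<lambda>i. p$i))"
proof -
  define Q where "Q = {p::real^4. (\<forall>i. p$i \<le> 1) \<and> 2 \<le> (\<Sum>i\<in>UNIV. p$i) \<and>
        (\<forall>i. (\<Sum>i\<in>UNIV. p$i) - 2 \<le> 2 * p$i)}"
  have cQ: "convex Q"
    unfolding convex_def
  proof (intro ballI allI impI)
    fix x y :: "real^4" and u v :: real
    assume xQ: "x \<in> Q" and yQ: "y \<in> Q" and u: "0 \<le> u" and v: "0 \<le> v" and uv: "u + v = 1"
    have x1: "\<forall>i. x $ i \<le> 1" and x2: "2 \<le> sum (($) x) UNIV" and x3: "\<forall>i. sum (($) x) UNIV - 2 \<le> 2 * x $ i"
      using xQ unfolding Q_def by auto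
    have y1: "\<forall>i. y $ i \<le> 1" and y2: "2 \<le> sum (($) y) UNIV" and y3: "\<forall>i. sum (($) y) UNIV - 2 \<le> 2 * y $ i"
      using yQ unfolding Q_def by auto
    have s: "(\<Sum>i\<in>UNIV. u * x $ i + v * y $ i) = u * sum (($) x) UNIV + v * sum (($) y) UNIV"
      by (simp add: sum.distrib sum_distrib_left)
    have "\<forall>i. u * x $ i + v * y $ i \<le> 1"
    proof
      fix i
      have "u * x$i \<le> u * 1" using x1 u by (intro mult_left_mono) auto
      moreover have "v * y$i \<le> v * 1" using y1 v by (intro mult_left_mono) auto
      ultimately show "u * x $ i + v * y $ i \<le> 1" using uv by simp
    qed
    moreover have "2 \<le> (\<Sum>i\<in>UNIV. u * x $ i + v * y $ i)"
    proof -
      have "u * 2 \<le> u * sum (($) x) UNIV" using x2 u by (intro mult_left_mono) auto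
      moreover have "v * 2 \<le> v * sum (($) y) UNIV" using y2 v by (intro mult_left_mono) auto
      ultimately show ?thesis using uv s by simp
    qed
    moreover have "\<forall>i. (\<Sum>i\<in>UNIV. u * x $ i + v * y $ i) - 2 \<le> 2 * (u * x $ i + v * y $ i)"
    proof
      fix i
      have "u * (sum (($) x) UNIV - 2) \<le> u * (2 * x$i)" using x3 u by (intro mult_left_mono) auto
      moreover have "v * (sum (($) y) UNIV - 2) \<le> v * (2 * y$i)" using y3 v by (intro mult_left_mono) auto
      ultimately show "(\<Sum>i\<in>UNIV. u * x $ i + v * y $ i) - 2 \<le> 2 * (u * x $ i + v * y $ i)"
        using uv s by (simp add: algebra_simps)
    qed
    ultimately show "u *\<^sub>R x + v *\<^sub>R y \<in> Q" unfolding Q_def by simp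
  qed
  have PQ: "{vector [1,1,1,1], vector [0,0,1,1], vector [0,1,0,1],
             vector [0,1,1,0], vector [1,0,0,1], vector [1,0,1,0], vector [1,1,0,0]} \<subseteq> Q"
    unfolding Q_def by (simp add: sum_4 forall_4)
  have "convex hull {vector [1,1,1,1], vector [0,0,1,1], vector [0,1,0,1],
             vector [0,1,1,0], vector [1,0,0,1], vector [1,0,1,0], vector [1,1,0,0]} \<subseteq> Q"
    using PQ cQ by (rule hull_minimal)
  then have "p \<in> interior Q" using assms interior_mono by blast
  then obtain e where e: "e > 0" "ball p e \<subseteq> Q" using mem_interior by blast
  have b1: "p + (e/2) *\<^sub>R axis i 1 \<in> Q" for i
    using e by (intro subsetD[OF e(2)]) (simp add: dist_norm)
  have b2: "p + (-e/2) *\<^sub>R axis i 1 \<in> Q" for i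
    using e by (intro subsetD[OF e(2)]) (simp add: dist_norm)
  have b3': "p + (-e/8) *\<^sub>R (\<chi> j. 1) \<in> ball p e"
  proof -
    have "norm ((-e/8) *\<^sub>R (\<chi> j. 1::real^4)) \<le> (\<Sum>i\<in>UNIV. \<bar>((-e/8) *\<^sub>R (\<chi> j. 1::real^4))$i\<bar>)"
      by (rule norm_le_l1_cart)
    also have "\<dots> = e/2" using e by (simp add: sum_4)
    finally show "p + (-e/8) *\<^sub>R (\<chi> j. 1) \<in> ball p e" using e by (simp add: dist_norm)
  qed
  have b3: "p + (-e/8) *\<^sub>R (\<chi> j. 1) \<in> Q" using b3' e(2) by blast
  have lt1: "p$i < 1" for i
  proof -
    have "(p + (e/2) *\<^sub>R axis i 1)$i \<le> 1" using b1[of i] unfolding Q_def by blast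
    then show ?thesis using e by simp
  qed
  have sg: "2 < (\<Sum>i\<in>UNIV. p$i)"
  proof -
    have "2 \<le> (\<Sum>j\<in>UNIV. (p + (-e/8) *\<^sub>R (\<chi> j. 1))$j)" using b3 unfolding Q_def by blast
    also have "\<dots> = (\<Sum>j\<in>UNIV. p$j) - e/2" by (simp add: sum_4)
    finally show ?thesis using e by simp
  qed
  have lm: "(\<Sum>i\<in>UNIV. p$i) - 2 < 2 * p$i" for i
  proof -
    have "(\<Sum>j\<in>UNIV. (p + (-e/2) *\<^sub>R axis i 1)$j) - 2 \<le> 2 * (p + (-e/2) *\<^sub>R axis i 1)$i"
      using b2[of i] unfolding Q_def by blast
    then have "(\<Sum>j\<in>UNIV. p$j) + (-e/2) - 2 \<le> 2 * (p$i - e/2)"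
      by (simp only: sum_axis_add) simp
    then show ?thesis using e by simp
  qed
  have "(\<Sum>i\<in>UNIV. p$i) - 2 < 2 * Min (range (\<lambda>i. p$i))"
  proof -
    have "\<forall>a\<in>range (\<lambda>i. p$i). (\<Sum>i\<in>UNIV. p$i) / 2 - 1 < a"
      using lm by (auto simp: field_simps)
    then have "(\<Sum>i\<in>UNIV. p$i) / 2 - 1 < Min (range (\<lambda>i. p$i))"
      by (subst Min_gr_iff) auto
    then show ?thesis by (simp del: Min_gr_iff add: field_simps)
  qed
  moreover have "0 < p$i" for i using lm[of i] sg by simp
  ultimately show ?thesis using lt1 sg by auto
qed

lemma min_lt_iff4: "(x < 2 * Min (range (\<lambda>i. (p::real^4)$i))) \<longleftrightarrow> (\<forall>i. x < 2 * p$i)"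
proof -
  have "(x < 2 * Min (range (\<lambda>i. p$i))) \<longleftrightarrow> x/2 < Min (range (\<lambda>i. p$i))"
    by (simp del: Min_gr_iff add: field_simps)
  also have "\<dots> \<longleftrightarrow> (\<forall>a\<in>range (\<lambda>i. p$i). x/2 < a)" by (subst Min_gr_iff) auto
  also have "\<dots> \<longleftrightarrow> (\<forall>i. x < 2 * p$i)" by (auto simp: field_simps)
  finally show ?thesis .
qed

lemma part2:
  "{p :: real^4. (\<forall>i. 0 < p$i \<and> p$i < 1) \<and>
             0 < (\<Sum>i\<in>UNIV. p$i) - 2 \<and> (\<Sum>i\<in>UNIV. p$i) - 2 < 2 * Min (range (\<lambda>i. p$i))}
         = interior (convex hull {vector [1,1,1,1], vector [0,0,1,1], vector [0,1,0,1],
             vector [0,1,1,0], vector [1,0,0,1], vector [1,0,1,0], vector [1,1,0,0]})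
       \<and> convex {p :: real^4. (\<forall>i. 0 < p$i \<and> p$i < 1) \<and>
             0 < (\<Sum>i\<in>UNIV. p$i) - 2 \<and> (\<Sum>i\<in>UNIV. p$i) - 2 < 2 * Min (range (\<lambda>i. p$i))}"
proof -
  define S where "S = {p :: real^4. (\<forall>i. 0 < p$i \<and> p$i < 1) \<and>
             0 < (\<Sum>i\<in>UNIV. p$i) - 2 \<and> (\<Sum>i\<in>UNIV. p$i) - 2 < 2 * Min (range (\<lambda>i. p$i))}"
  have "S = {p. 0 < p$1 \<and> p$1 < 1 \<and> 0 < p$2 \<and> p$2 < 1 \<and> 0 < p$3 \<and> p$3 < 1 \<and> 0 < p$4 \<and> p$4 < 1 \<and>
      0 < p$1 + p$2 + p$3 + p$4 - 2 \<and> p$1 + p$2 + p$3 + p$4 - 2 < 2 * p$1 \<and>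
      p$1 + p$2 + p$3 + p$4 - 2 < 2 * p$2 \<and> p$1 + p$2 + p$3 + p$4 - 2 < 2 * p$3 \<and>
      p$1 + p$2 + p$3 + p$4 - 2 < 2 * p$4}"
    unfolding S_def min_lt_iff4 by (auto simp: sum_4 forall_4)
  then have oS: "open S"
    by (simp only:) (intro open_Collect_conj open_Collect_less continuous_intros)
  have "S \<subseteq> convex hull {vector [1,1,1,1], vector [0,0,1,1], vector [0,1,0,1],
             vector [0,1,1,0], vector [1,0,0,1], vector [1,0,1,0], vector [1,1,0,0]}"
    unfolding S_def using hull_pts_sub by blast
  then have "S \<subseteq> interior (convex hull {vector [1,1,1,1], vector [0,0,1,1], vector [0,1,0,1],
             vector [0,1,1,0], vector [1,0,0,1], vector [1,0,1,0], vector [1,1,0,0]})"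
    using oS interior_maximal by blast
  moreover have "interior (convex hull {vector [1,1,1,1], vector [0,0,1,1], vector [0,1,0,1],
             vector [0,1,1,0], vector [1,0,0,1], vector [1,0,1,0], vector [1,1,0,0]}) \<subseteq> S"
    unfolding S_def using interior_hull_sub by blast
  ultimately have eq: "S = interior (convex hull {vector [1,1,1,1], vector [0,0,1,1], vector [0,1,0,1],
             vector [0,1,1,0], vector [1,0,0,1], vector [1,0,1,0], vector [1,1,0,0]})" by blast
  moreover have "convex S" unfolding eq by (intro convex_interior convex_convex_hull)
  ultimately show ?thesis unfolding S_def by blast
qed

definition ang :: "real^3 \<Rightarrow> real^3 \<Rightarrow> real" where
  "ang a b = arccos ((a \<bullet> b) / (norm a * norm b))"

lemma ang_sym: "ang a b = ang b a"
  unfolding ang_def by (simp add: inner_commute mult.commute)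

lemma cs_bound: "\<bar>(a \<bullet> b) / (norm a * norm b)\<bar> \<le> 1"
proof (cases "a = 0 \<or> b = 0")
  case True then show ?thesis by auto
next
  case False
  then have "norm a * norm b > 0" by simp
  then show ?thesis using Cauchy_Schwarz_ineq2[of a b] by (simp add: abs_div divide_le_eq_1)
qed

lemma cs_bounds: "-1 \<le> (a \<bullet> b) / (norm a * norm b)" "(a \<bullet> b) / (norm a * norm b) \<le> 1"
  using cs_bound[of a b] by linarith+

lemma cos_ang: "cos (ang a b) = (a \<bullet> b) / (norm a * norm b)"
  unfolding ang_def using cs_bounds[of a b] by simp

lemma ang_bounds: "0 \<le> ang a b" "ang a b \<le> pi"
  unfolding ang_def using cs_bounds[of a b] arccos_bounded by auto

lemma sin_ang:
  assumes "a \<noteq> 0" "b \<noteq> 0"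
  shows "sin (ang a b) = norm (a \<times> b) / (norm a * norm b)"
proof -
  have p: "norm a * norm b > 0" using assms by simp
  have "sin (ang a b) = sqrt (1 - ((a \<bullet> b) / (norm a * norm b))\<^sup>2)"
    unfolding ang_def using cs_bounds[of a b] by (simp add: sin_arccos)
  also have "1 - ((a \<bullet> b) / (norm a * norm b))\<^sup>2 = (norm (a \<times> b) / (norm a * norm b))\<^sup>2"
  proof -
    have e: "(a \<bullet> b)\<^sup>2 + (norm (a \<times> b))\<^sup>2 = (norm a * norm b)\<^sup>2" using norm_cross_dot[of a b] by simp
    have d: "(norm a * norm b)\<^sup>2 > 0" using assms by simp
    have "1 - ((a \<bullet> b) / (norm a * norm b))\<^sup>2 = ((norm a * norm b)\<^sup>2 - (a \<bullet> b)\<^sup>2) / (norm a * norm b)\<^sup>2"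
      using d assms by (simp add: power_divide diff_divide_distrib)
    also have "\<dots> = (norm (a \<times> b) / (norm a * norm b))\<^sup>2" using e by (simp add: power_divide)
    finally show ?thesis .
  qed
  finally show ?thesis by simp
qed

lemma ang_neg:
  assumes "a \<noteq> 0" "b \<noteq> 0"
  shows "ang a (-b) = pi - ang a b"
  unfolding ang_def using cs_bounds[of a b] by (simp add: arccos_minus)

lemma cross_cross_same: "(a \<times> b) \<times> (b \<times> c) = ((a \<times> b) \<bullet> c) *\<^sub>R b"
  using exhaust_3 by (force simp add: cross3_simps)

lemma ang_pos:
  assumes "a \<times> b \<noteq> 0"
  shows "0 < ang a b" "ang a b < pi"
proof -
  have ab: "a \<noteq> 0" "b \<noteq> 0" using assms by auto
  have "sin (ang a b) > 0" using sin_ang[OF ab] assms ab by simp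
  then show "0 < ang a b" "ang a b < pi" using ang_bounds[of a b]
    by (metis less_eq_real_def order_less_irrefl sin_pi sin_zero)+
qed

lemma ang_tri_gen:
  assumes a: "a \<noteq> 0" and b: "b \<noteq> 0" and c: "c \<noteq> 0"
  shows "ang a c \<le> ang a b + ang b c"
    and "(a \<times> b) \<bullet> c \<noteq> 0 \<Longrightarrow> ang a c < ang a b + ang b c"
proof -
  define z where "z = (a \<bullet> c) / (norm a * norm c)"
  have nz: "norm a > 0" "norm b > 0" "norm c > 0" using a b c by auto
  have cs: "cos (ang a b + ang b c) = ((a \<bullet> b) * (b \<bullet> c) - norm (a \<times> b) * norm (b \<times> c)) / (norm a * (norm b)\<^sup>2 * norm c)"
    unfolding cos_add cos_ang sin_ang[OF a b] sin_ang[OF b c] using nz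
    by (simp add: field_simps power2_eq_square)
  have key: "(a \<bullet> b) * (b \<bullet> c) - norm (a \<times> b) * norm (b \<times> c) \<le> (a \<bullet> c) * (norm b)\<^sup>2"
    and keys: "(a \<times> b) \<bullet> c \<noteq> 0 \<Longrightarrow> (a \<bullet> b) * (b \<bullet> c) - norm (a \<times> b) * norm (b \<times> c) < (a \<bullet> c) * (norm b)\<^sup>2"
  proof -
    have dc: "(a \<times> b) \<bullet> (b \<times> c) = (a \<bullet> b) * (b \<bullet> c) - (a \<bullet> c) * (norm b)\<^sup>2"
      using dot_cross[of a b b c] by (simp add: power2_norm_eq_inner inner_commute)
    have "(a \<times> b) \<bullet> (b \<times> c) \<le> norm (a \<times> b) * norm (b \<times> c)" by (rule norm_cauchy_schwarz)
    then show "(a \<bullet> b) * (b \<bullet> c) - norm (a \<times> b) * norm (b \<times> c) \<le> (a \<bullet> c) * (norm b)\<^sup>2"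
      using dc by simp
    assume t: "(a \<times> b) \<bullet> c \<noteq> 0"
    have "(a \<times> b) \<bullet> (b \<times> c) \<noteq> norm (a \<times> b) * norm (b \<times> c)"
    proof
      assume eq: "(a \<times> b) \<bullet> (b \<times> c) = norm (a \<times> b) * norm (b \<times> c)"
      have "(norm ((a \<times> b) \<times> (b \<times> c)))\<^sup>2 = 0"
        using norm_cross_dot[of "a \<times> b" "b \<times> c"] eq by (simp add: power_mult_distrib)
      then have "(a \<times> b) \<times> (b \<times> c) = 0" by simp
      then show False using t b by (simp add: cross_cross_same)
    qed
    with \<open>(a \<times> b) \<bullet> (b \<times> c) \<le> norm (a \<times> b) * norm (b \<times> c)\<close>
    show "(a \<bullet> b) * (b \<bullet> c) - norm (a \<times> b) * norm (b \<times> c) < (a \<bullet> c) * (norm b)\<^sup>2"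
      using dc by simp
  qed
  have zb: "-1 \<le> z" "z \<le> 1" unfolding z_def by (rule cs_bounds)+
  have D: "norm a * (norm b)\<^sup>2 * norm c > 0" using nz by simp
  have zD: "z = (a \<bullet> c) * (norm b)\<^sup>2 / (norm a * (norm b)\<^sup>2 * norm c)"
    unfolding z_def using nz by (simp add: field_simps power2_eq_square)
  have cz: "cos (ang a b + ang b c) \<le> z"
    unfolding cs zD using key D by (intro divide_right_mono) auto
  have czs: "(a \<times> b) \<bullet> c \<noteq> 0 \<Longrightarrow> cos (ang a b + ang b c) < z"
    unfolding cs zD using keys D by (intro divide_strict_right_mono) auto
  have acz: "ang a c = arccos z" unfolding ang_def z_def ..
  have s0: "0 \<le> ang a b + ang b c" using ang_bounds[of a b] ang_bounds[of b c] by simp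
  show "ang a c \<le> ang a b + ang b c"
  proof (cases "ang a b + ang b c \<le> pi")
    case True
    have "arccos z \<le> arccos (cos (ang a b + ang b c))"
      using cz zb by (intro arccos_le_arccos) auto
    then show ?thesis using arccos_cos[OF s0 True] acz by simp
  next
    case False then show ?thesis using ang_bounds[of a c] by simp
  qed
  assume t: "(a \<times> b) \<bullet> c \<noteq> 0"
  show "ang a c < ang a b + ang b c"
  proof (cases "ang a b + ang b c \<le> pi")
    case True
    have "arccos z < arccos (cos (ang a b + ang b c))"
      using czs[OF t] zb by (intro arccos_less_arccos) auto
    then show ?thesis using arccos_cos[OF s0 True] acz by simp
  next
    case False then show ?thesis using ang_bounds[of a c] by simp
  qed
qed

lemma trip_perm: "(a \<times> b) \<bullet> c = (b \<times> c) \<bullet> a" "(a \<times> b) \<bullet> c = - ((b \<times> a) \<bullet> c)"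
  "(a \<times> b) \<bullet> c = (c \<times> a) \<bullet> b"
  by (simp_all add: cross3_simps)

lemma trip_nz: "(a \<times> b) \<bullet> c \<noteq> 0 \<Longrightarrow> a \<noteq> 0 \<and> b \<noteq> 0 \<and> c \<noteq> 0 \<and> a \<times> b \<noteq> 0"
  by auto

lemma ang_add:
  assumes ac: "a \<times> c \<noteq> 0" and s: "s > 0" and t: "t > 0" and b: "b = s *\<^sub>R a + t *\<^sub>R c"
  shows "ang a b + ang b c = ang a c"
proof -
  have a: "a \<noteq> 0" and c: "c \<noteq> 0" using ac by auto
  have ab: "a \<times> b = t *\<^sub>R (a \<times> c)" unfolding b by (simp add: cross_add_right cross_mult_right)
  have bc: "b \<times> c = s *\<^sub>R (a \<times> c)" unfolding b by (simp add: cross_add_left cross_mult_left)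
  have b0: "b \<noteq> 0" using ab ac t by auto
  have nz: "norm a > 0" "norm b > 0" "norm c > 0" using a b0 c by auto
  define D where "D = norm a * (norm b)\<^sup>2 * norm c"
  have D: "D > 0" unfolding D_def using nz by simp
  have cs: "cos (ang a b + ang b c) = ((a \<bullet> b) * (b \<bullet> c) - norm (a \<times> b) * norm (b \<times> c)) / D"
    unfolding cos_add cos_ang sin_ang[OF a b0] sin_ang[OF b0 c] D_def using nz
    by (simp add: field_simps power2_eq_square)
  have sn: "sin (ang a b + ang b c) = (norm (a \<times> b) * (b \<bullet> c) + (a \<bullet> b) * norm (b \<times> c)) / D"
    unfolding sin_add cos_ang sin_ang[OF a b0] sin_ang[OF b0 c] D_def using nz
    by (simp add: field_simps power2_eq_square)
  have dc: "(a \<times> b) \<bullet> (b \<times> c) = (a \<bullet> b) * (b \<bullet> c) - (a \<bullet> c) * (norm b)\<^sup>2"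
    using dot_cross[of a b b c] by (simp add: power2_norm_eq_inner inner_commute)
  have "(a \<times> b) \<bullet> (b \<times> c) = s * t * (norm (a \<times> c))\<^sup>2"
    unfolding ab bc by (simp add: power2_norm_eq_inner)
  moreover have "norm (a \<times> b) * norm (b \<times> c) = s * t * (norm (a \<times> c))\<^sup>2"
    unfolding ab bc using s t by (simp add: power2_eq_square)
  ultimately have num: "(a \<bullet> b) * (b \<bullet> c) - norm (a \<times> b) * norm (b \<times> c) = (a \<bullet> c) * (norm b)\<^sup>2"
    using dc by simp
  have cz: "cos (ang a b + ang b c) = (a \<bullet> c) / (norm a * norm c)"
    unfolding cs num D_def using nz by (simp add: field_simps power2_eq_square)
  have "norm (a \<times> b) * (b \<bullet> c) + (a \<bullet> b) * norm (b \<times> c) = norm (a \<times> c) * (b \<bullet> (s *\<^sub>R a + t *\<^sub>R c))"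
    unfolding ab bc using s t by (simp add: algebra_simps inner_commute)
  also have "\<dots> = norm (a \<times> c) * (norm b)\<^sup>2" unfolding b[symmetric] by (simp add: power2_norm_eq_inner)
  finally have "sin (ang a b + ang b c) > 0" unfolding sn using D ac nz by simp
  moreover have "ang a b + ang b c \<ge> 0" using ang_bounds[of a b] ang_bounds[of b c] by simp
  moreover have "ang a b + ang b c \<le> 2 * pi" using ang_bounds[of a b] ang_bounds[of b c] by simp
  ultimately have le: "ang a b + ang b c \<le> pi"
  proof -
    assume sp: "sin (ang a b + ang b c) > 0" and "ang a b + ang b c \<le> 2 * pi"
    show ?thesis
    proof (rule ccontr)
      assume "\<not> ang a b + ang b c \<le> pi"
      then have "0 \<le> ang a b + ang b c - pi" "ang a b + ang b c - pi \<le> pi"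
        using \<open>ang a b + ang b c \<le> 2 * pi\<close> by auto
      then have "0 \<le> sin (ang a b + ang b c - pi)" by (rule sin_ge_zero)
      then show False using sp by (simp add: sin_diff)
    qed
  qed
  have "ang a b + ang b c = arccos (cos (ang a b + ang b c))"
    using le ang_bounds[of a b] ang_bounds[of b c] by (simp add: arccos_cos)
  also have "\<dots> = ang a c" by (subst cz) (simp only: ang_def)
  finally show ?thesis .
qed

lemma perim3:
  assumes "(p \<times> q) \<bullet> r \<noteq> 0"
  shows "ang p q + ang q r + ang r p < 2 * pi"
proof -
  have nz: "p \<noteq> 0" "q \<noteq> 0" "r \<noteq> 0" using assms by auto
  have "(q \<times> -p) \<bullet> r \<noteq> 0" using assms trip_perm(2)[of p q r] by simp
  then have "ang q r < ang q (-p) + ang (-p) r"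
    using nz by (intro ang_tri_gen(2)) auto
  also have "ang q (-p) = pi - ang q p" using nz by (simp add: ang_neg)
  also have "ang (-p) r = pi - ang r p" using nz by (simp add: ang_sym[of "-p"] ang_neg)
  finally show ?thesis using ang_sym[of p q] by simp
qed

lemma quad_ineq:
  assumes t123: "(n1 \<times> n2) \<bullet> n3 \<noteq> 0" and t124: "(n1 \<times> n2) \<bullet> n4 \<noteq> 0"
    and t134: "(n1 \<times> n3) \<bullet> n4 \<noteq> 0" and t234: "(n2 \<times> n3) \<bullet> n4 \<noteq> 0"
    and pos: "l1 > 0" "l2 > 0" "m3 > 0" "m4 > 0"
    and rel: "l1 *\<^sub>R n1 + l2 *\<^sub>R n2 = m3 *\<^sub>R n3 + m4 *\<^sub>R n4"
  shows "ang n1 n3 + ang n1 n4 + ang n2 n3 + ang n2 n4 < 2 * pi"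
    and "2 * ang n1 n3 < ang n1 n3 + ang n1 n4 + ang n2 n3 + ang n2 n4"
proof -
  have nz: "n1 \<noteq> 0" "n2 \<noteq> 0" "n3 \<noteq> 0" "n4 \<noteq> 0" using t123 t124 by auto
  have "(n1 \<times> n4) \<bullet> n2 = - ((n1 \<times> n2) \<bullet> n4)" by (simp add: cross3_simps)
  then have tp: "(n1 \<times> n4) \<bullet> n2 \<noteq> 0" using t124 by simp
  have "ang n1 n2 < ang n1 n4 + ang n4 n2" by (rule ang_tri_gen(2)[OF nz(1) nz(4) nz(2) tp])
  moreover have "ang n1 n3 \<le> ang n1 n2 + ang n2 n3" using nz by (intro ang_tri_gen(1)) auto
  ultimately show "2 * ang n1 n3 < ang n1 n3 + ang n1 n4 + ang n2 n3 + ang n2 n4"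
    using ang_sym[of n4 n2] by simp
  define d where "d = l2 *\<^sub>R n2 - m3 *\<^sub>R n3"
  have d2: "d = m4 *\<^sub>R n4 - l1 *\<^sub>R n1" unfolding d_def using rel
    by (simp add: algebra_simps)
  have "n3 \<times> d = l2 *\<^sub>R (n3 \<times> n2)" unfolding d_def by (simp add: Cross3.right_diff_distrib cross_mult_right)
  then have c3d: "n3 \<times> d \<noteq> 0" using pos t123 trip_perm(2)[of n2 n3 n1] trip_perm(1)[of n1 n2 n3] by auto
  have e2: "n2 = (m3 / l2) *\<^sub>R n3 + (1 / l2) *\<^sub>R d" unfolding d_def using pos by (simp add: algebra_simps)
  have A1: "ang n3 n2 + ang n2 d = ang n3 d" using c3d pos by (intro ang_add[OF c3d _ _ e2]) auto
  have "n1 \<times> d = m4 *\<^sub>R (n1 \<times> n4)" unfolding d2 by (simp add: Cross3.right_diff_distrib cross_mult_right)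
  then have c1d: "n1 \<times> d \<noteq> 0" using pos tp by auto
  have e4: "n4 = (l1 / m4) *\<^sub>R n1 + (1 / m4) *\<^sub>R d" unfolding d2 using pos by (simp add: algebra_simps)
  have A2: "ang n1 n4 + ang n4 d = ang n1 d" using c1d pos by (intro ang_add[OF c1d _ _ e4]) auto
  have "(n1 \<times> n3) \<bullet> d = l2 * ((n1 \<times> n3) \<bullet> n2)" unfolding d_def by (simp add: inner_diff_right dot_cross_self)
  then have "(n1 \<times> n3) \<bullet> d \<noteq> 0" using pos t123 trip_perm(3)[of n1 n2 n3] trip_perm(2)[of n3 n1 n2] by auto
  then have P: "ang n1 n3 + ang n3 d + ang d n1 < 2 * pi" by (rule perim3)
  have d0: "d \<noteq> 0" using c1d by auto
  have T: "ang n2 n4 \<le> ang n2 d + ang d n4" using nz d0 by (intro ang_tri_gen(1)) auto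
  show "ang n1 n3 + ang n1 n4 + ang n2 n3 + ang n2 n4 < 2 * pi"
    using A1 A2 P T ang_sym[of n3 n2] ang_sym[of d n4] ang_sym[of d n1] by linarith
qed

lemma cross_id1: "x \<times> (a \<times> b) = (x \<bullet> b) *\<^sub>R a - (x \<bullet> a) *\<^sub>R b"
  using exhaust_3 by (force simp add: cross3_simps)

lemma par_cross:
  assumes "x \<bullet> a = 0" "x \<bullet> b = 0" and False: "a \<times> b \<noteq> 0"
  shows "x = ((x \<bullet> (a \<times> b)) / ((a \<times> b) \<bullet> (a \<times> b))) *\<^sub>R (a \<times> b)"
proof -
  let ?c = "a \<times> b"
  have "x \<times> ?c = 0" using assms by (simp add: cross_id1)
  then have "?c \<times> (x \<times> ?c) = 0" by simp
  moreover have "?c \<times> (x \<times> ?c) = (?c \<bullet> ?c) *\<^sub>R x - (?c \<bullet> x) *\<^sub>R ?c" by (rule cross_id1)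
  ultimately have "(?c \<bullet> ?c) *\<^sub>R x - (?c \<bullet> x) *\<^sub>R ?c = 0" by simp
  then have "(?c \<bullet> ?c) *\<^sub>R x = (?c \<bullet> x) *\<^sub>R ?c" by simp
  moreover have "?c \<bullet> ?c \<noteq> 0" using False by simp
  ultimately have "(1 / (?c \<bullet> ?c)) *\<^sub>R ((?c \<bullet> ?c) *\<^sub>R x) = (1 / (?c \<bullet> ?c)) *\<^sub>R ((?c \<bullet> x) *\<^sub>R ?c)"
    "?c \<bullet> ?c \<noteq> 0" by simp_all
  then show ?thesis by (simp add: inner_commute)
qed

lemma same_normal:
  assumes "a \<times> b = 0" "a \<noteq> 0" "b \<noteq> 0"
  shows "(x \<bullet> a = 0) \<longleftrightarrow> (x \<bullet> b = 0)"
proof -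
  have "x \<times> (a \<times> b) = 0" using assms by simp
  then have e: "(x \<bullet> b) *\<^sub>R a = (x \<bullet> a) *\<^sub>R b" by (simp add: cross_id1)
  show ?thesis
  proof
    assume "x \<bullet> a = 0" then show "x \<bullet> b = 0" using e assms by simp
  next
    assume "x \<bullet> b = 0" then show "x \<bullet> a = 0" using e assms by simp
  qed
qed

lemma face_char:
  fixes M :: "nat \<Rightarrow> real^3"
  assumes C: "\<forall>i<4. C i = {x \<in> sphere 0 1. M i \<bullet> x = 0}"
    and x0: "x0 \<in> sphere 0 1" "\<forall>i<4. M i \<bullet> x0 > 0"
    and F: "F = connected_component_set (sphere 0 1 - (\<Union>i<4. C i)) x0"
  shows "F = {x \<in> sphere 0 1. \<forall>i<4. M i \<bullet> x > 0}"
proof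
  let ?U = "{x \<in> sphere 0 (1::real). \<forall>i<4. M i \<bullet> x > 0}"
  let ?K = "{x::real^3. \<forall>i<4. M i \<bullet> x > 0}"
  have cK: "convex ?K"
    unfolding convex_def
  proof (intro ballI allI impI, simp only: mem_Collect_eq, intro allI impI)
    fix x y :: "real^3" and u v :: real and i :: nat
    assume x: "\<forall>i<4. 0 < M i \<bullet> x" and y: "\<forall>i<4. 0 < M i \<bullet> y" and u: "0 \<le> u" and v: "0 \<le> v"
      and uv: "u + v = 1" and i: "i < 4"
    have "M i \<bullet> (u *\<^sub>R x + v *\<^sub>R y) = u * (M i \<bullet> x) + v * (M i \<bullet> y)" by (simp add: inner_add_right)
    moreover have "u * (M i \<bullet> x) + v * (M i \<bullet> y) > 0"
    proof (cases "u = 0")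
      case True then show ?thesis using uv y i by simp
    next
      case False
      then have "u * (M i \<bullet> x) > 0" using u x i by simp
      moreover have "M i \<bullet> y > 0" using y i by simp
      then have "v * (M i \<bullet> y) \<ge> 0" using v by simp
      ultimately show ?thesis by simp
    qed
    ultimately show "0 < M i \<bullet> (u *\<^sub>R x + v *\<^sub>R y)" by simp
  qed
  have K0: "0 \<notin> ?K" by (auto intro!: exI[of _ 0])
  have "?U = (\<lambda>x. (1 / norm x) *\<^sub>R x) ` ?K"
  proof
    show "?U \<subseteq> (\<lambda>x. (1 / norm x) *\<^sub>R x) ` ?K"
    proof
      fix x assume "x \<in> ?U"
      then have "x \<in> ?K" "norm x = 1" by auto
      then show "x \<in> (\<lambda>x. (1 / norm x) *\<^sub>R x) ` ?K" by (intro image_eqI[of _ _ x]) auto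
    qed
    show "(\<lambda>x. (1 / norm x) *\<^sub>R x) ` ?K \<subseteq> ?U"
    proof
      fix y assume "y \<in> (\<lambda>x. (1 / norm x) *\<^sub>R x) ` ?K"
      then obtain x where x: "x \<in> ?K" "y = (1 / norm x) *\<^sub>R x" by auto
      have "x \<noteq> 0" using x K0 by auto
      then have "norm y = 1" using x by simp
      moreover have "M i \<bullet> y > 0" if "i < 4" for i
        using x that \<open>x \<noteq> 0\<close> by simp
      ultimately show "y \<in> ?U" by simp
    qed
  qed
  moreover have "connected ((\<lambda>x. (1 / norm x) *\<^sub>R x) ` ?K)"
  proof (rule connected_continuous_image)
    show "continuous_on ?K (\<lambda>x. (1 / norm x) *\<^sub>R x)"
      using K0 by (intro continuous_intros) auto
    show "connected ?K" using cK by (rule convex_connected)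
  qed
  ultimately have cU: "connected ?U" by simp
  have x0U: "x0 \<in> ?U" using x0 by simp
  have US: "?U \<subseteq> sphere 0 1 - (\<Union>i<4. C i)" using C by auto
  have UF: "?U \<subseteq> F" unfolding F using connected_component_maximal[OF x0U cU US] .
  then show "?U \<subseteq> F" .
  show "F \<subseteq> ?U"
  proof
    fix y assume yF: "y \<in> F"
    have FS: "F \<subseteq> sphere 0 1 - (\<Union>i<4. C i)" unfolding F by (rule connected_component_subset)
    have cF: "connected F" unfolding F by simp
    have x0F: "x0 \<in> F" using x0U UF by blast
    have "M i \<bullet> y > 0" if i: "i < 4" for i
    proof (rule ccontr)
      assume "\<not> M i \<bullet> y > 0"
      then have "inner (M i) y \<le> 0" "0 \<le> inner (M i) x0" using x0 i by auto
      then obtain z where z: "z \<in> F" "inner (M i) z = 0"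
        using connected_ivt_hyperplane[OF cF yF x0F] by blast
      then have "z \<in> C i" using C FS i by auto
      then show False using z FS i by auto
    qed
    then show "y \<in> ?U" using yF FS by auto
  qed
qed

lemma closure_char:
  fixes M :: "nat \<Rightarrow> real^3"
  assumes F: "F = {x \<in> sphere 0 1. \<forall>i<4. M i \<bullet> x > 0}" and x0: "x0 \<in> F"
  shows "closure F = {x \<in> sphere 0 1. \<forall>i<4. M i \<bullet> x \<ge> 0}"
proof
  let ?K = "{x \<in> sphere 0 (1::real). \<forall>i<4. M i \<bullet> x \<ge> 0}"
  have "?K = sphere 0 1 \<inter> (\<Inter>i\<in>{..<4}. {x. M i \<bullet> x \<ge> 0})" by auto
  moreover have "closed (sphere 0 1 \<inter> (\<Inter>i\<in>{..<4}. {x. M i \<bullet> x \<ge> 0}))"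
    by (intro closed_Int closed_INT ballI closed_sphere closed_halfspace_ge)
  ultimately have "closed ?K" by simp
  moreover have "F \<subseteq> ?K" unfolding F by auto
  ultimately show "closure F \<subseteq> ?K" by (rule closure_minimal[rotated])
  show "?K \<subseteq> closure F"
  proof
    fix y assume yK: "y \<in> ?K"
    define w where "w = (\<lambda>t::real. (1 - t) *\<^sub>R y + t *\<^sub>R x0)"
    define g where "g = (\<lambda>t. (1 / norm (w t)) *\<^sub>R w t)"
    have pos: "M i \<bullet> w t > 0" if "i < 4" "0 < t" "t \<le> 1" for i t
    proof -
      have "M i \<bullet> w t = (1 - t) * (M i \<bullet> y) + t * (M i \<bullet> x0)" unfolding w_def by (simp add: inner_add_right)
      moreover have "(1 - t) * (M i \<bullet> y) \<ge> 0" using yK that by simp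
      moreover have "t * (M i \<bullet> x0) > 0" using x0 that unfolding F by simp
      ultimately show ?thesis by simp
    qed
    have w0: "w t \<noteq> 0" if "0 \<le> t" "t \<le> 1" for t
    proof (cases "t = 0")
      case True
      have "norm y = 1" using yK by simp
      then have "y \<noteq> 0" by auto
      with True show ?thesis by (simp add: w_def)
    next
      case False then show ?thesis using pos[of 0 t] that by auto
    qed
    have "g ` {0<..1} \<subseteq> F"
    proof
      fix z assume "z \<in> g ` {0<..1}"
      then obtain t where t: "0 < t" "t \<le> 1" "z = g t" by auto
      have "w t \<noteq> 0" using w0 t by simp
      then have "norm z = 1" using t by (simp add: g_def)
      moreover have "M i \<bullet> z > 0" if "i < 4" for i
        using pos[OF that t(1,2)] t \<open>w t \<noteq> 0\<close> by (simp add: g_def)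
      ultimately show "z \<in> F" unfolding F by simp
    qed
    then have "g ` {0<..1} \<subseteq> closure F" using closure_subset by blast
    moreover have "continuous_on (closure {0<..(1::real)}) g"
    proof -
      have "continuous_on {0..1} g" unfolding g_def w_def
        using w0 unfolding w_def by (intro continuous_intros) auto
      then show ?thesis by simp
    qed
    ultimately have "g ` closure {0<..1} \<subseteq> closure F"
      using image_closure_subset[of "{0<..(1::real)}" g "closure F"] by blast
    moreover have "g 0 = y" using yK by (simp add: g_def w_def)
    ultimately show "y \<in> closure F" by force
  qed
qed

definition gp :: "(nat \<Rightarrow> real^3) \<Rightarrow> bool" where
  "gp M \<longleftrightarrow> (\<forall>i<4. \<forall>j<4. \<forall>k<4. i \<noteq> j \<and> j \<noteq> k \<and> i \<noteq> k \<longrightarrow> (M i \<times> M j) \<bullet> M k \<noteq> 0)"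

lemma gpD: "gp M \<Longrightarrow> i < 4 \<Longrightarrow> j < 4 \<Longrightarrow> k < 4 \<Longrightarrow> i \<noteq> j \<Longrightarrow> j \<noteq> k \<Longrightarrow> i \<noteq> k \<Longrightarrow> (M i \<times> M j) \<bullet> M k \<noteq> 0"
  unfolding gp_def by blast

lemma gp_cross: "gp M \<Longrightarrow> i < 4 \<Longrightarrow> j < 4 \<Longrightarrow> i \<noteq> j \<Longrightarrow> M i \<times> M j \<noteq> 0"
proof -
  assume g: "gp M" and ij: "i < 4" "j < 4" "i \<noteq> j"
  obtain k where k: "k < 4" "k \<noteq> i" "k \<noteq> j"
  proof (cases "i \<noteq> 0 \<and> j \<noteq> 0")
    case True then show ?thesis using that[of 0] by auto
  next
    case False
    then have "i = 0 \<or> j = 0" by auto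
    then show ?thesis
    proof
      assume "i = 0" then show ?thesis using that[of 1] that[of 2] by (cases "j = 1") auto
    next
      assume "j = 0" then show ?thesis using that[of 1] that[of 2] by (cases "i = 1") auto
    qed
  qed
  then show ?thesis using gpD[OF g ij(1,2) k(1) ij(3)] by auto
qed

lemma gp_nz: "gp M \<Longrightarrow> i < 4 \<Longrightarrow> M i \<noteq> 0"
proof -
  assume g: "gp M" and i: "i < 4"
  have "M i \<times> M (if i = 0 then 1 else 0) \<noteq> 0" using gp_cross[OF g i, of "if i = 0 then 1 else 0"] by auto
  then show ?thesis by auto
qed

lemma vtx_unique:
  assumes g: "gp M" and ij: "i < 4" "j < 4" "k < 4" "i \<noteq> j"
    and x: "norm x = 1" "M i \<bullet> x = 0" "M j \<bullet> x = 0" "M k \<bullet> x > 0"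
    and y: "norm y = 1" "M i \<bullet> y = 0" "M j \<bullet> y = 0" "M k \<bullet> y > 0"
  shows "x = y"
proof -
  let ?c = "M i \<times> M j"
  have c: "?c \<noteq> 0" using gp_cross[OF g ij(1,2,4)] .
  define \<alpha> where "\<alpha> = (x \<bullet> ?c) / (?c \<bullet> ?c)"
  define \<beta> where "\<beta> = (y \<bullet> ?c) / (?c \<bullet> ?c)"
  have xa: "x = \<alpha> *\<^sub>R ?c" unfolding \<alpha>_def using x c by (intro par_cross) (auto simp: inner_commute)
  have yb: "y = \<beta> *\<^sub>R ?c" unfolding \<beta>_def using y c by (intro par_cross) (auto simp: inner_commute)
  have "\<alpha> * (M k \<bullet> ?c) > 0" using x(4) xa by (metis inner_scaleR_right)
  moreover have "\<beta> * (M k \<bullet> ?c) > 0" using y(4) yb by (metis inner_scaleR_right)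
  ultimately have "(\<alpha> * (M k \<bullet> ?c)) * (\<beta> * (M k \<bullet> ?c)) > 0" by (rule mult_pos_pos)
  then have "(\<alpha> * \<beta>) * ((M k \<bullet> ?c) * (M k \<bullet> ?c)) > 0" by (simp add: mult_ac)
  then have ab: "\<alpha> * \<beta> > 0" by (meson mult_nonpos_nonneg not_le zero_le_square)
  have "\<bar>\<alpha>\<bar> * norm ?c = 1" using x(1) xa by simp
  moreover have "\<bar>\<beta>\<bar> * norm ?c = 1" using y(1) yb by simp
  ultimately have "\<bar>\<alpha>\<bar> * norm ?c = \<bar>\<beta>\<bar> * norm ?c" by simp
  then have "\<bar>\<alpha>\<bar> = \<bar>\<beta>\<bar>" using c by simp
  then have "\<alpha> = \<beta> \<or> \<alpha> = - \<beta>" by (simp add: abs_eq_iff)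
  moreover have "\<alpha> \<noteq> - \<beta>"
  proof
    assume "\<alpha> = - \<beta>"
    then have "\<alpha> * \<beta> = - (\<beta> * \<beta>)" by simp
    moreover have "\<beta> * \<beta> \<ge> 0" by simp
    ultimately show False using ab by linarith
  qed
  ultimately have "\<alpha> = \<beta>" by blast
  then show ?thesis using xa yb by simp
qed

definition dir :: "real^3 \<Rightarrow> real^3 \<Rightarrow> real^3" where
  "dir a b = (- 1 / norm (a \<times> (a \<times> b))) *\<^sub>R (a \<times> (a \<times> b))"

lemma norm_aab: "norm (a \<times> (a \<times> b)) = norm a * norm (a \<times> b)"
proof -
  have "(norm (a \<times> (a \<times> b)))\<^sup>2 = (norm a * norm (a \<times> b))\<^sup>2"
    using norm_cross_dot[of a "a \<times> b"] by (simp add: dot_cross_self)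
  then show ?thesis by (simp add: power2_eq_iff_nonneg)
qed

lemma dir_props:
  assumes ab: "a \<times> b \<noteq> 0"
  shows "norm (dir a b) = 1" "a \<bullet> dir a b = 0" "(a \<times> b) \<bullet> dir a b = 0" "b \<bullet> dir a b > 0"
    "a \<times> (a \<times> b) \<noteq> 0"
proof -
  have a: "a \<noteq> 0" using ab by auto
  have n: "norm (a \<times> (a \<times> b)) > 0" unfolding norm_aab using a ab by simp
  then show "norm (dir a b) = 1" unfolding dir_def by simp
  show "a \<times> (a \<times> b) \<noteq> 0" using n by auto
  show "a \<bullet> dir a b = 0" unfolding dir_def by (simp add: dot_cross_self)
  show "(a \<times> b) \<bullet> dir a b = 0" unfolding dir_def by (simp add: dot_cross_self)
  have "b \<bullet> (a \<times> (a \<times> b)) = - ((a \<times> b) \<bullet> (a \<times> b))"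
    by (simp add: cross3_simps power2_eq_square) 
  then have "b \<bullet> (a \<times> (a \<times> b)) < 0" using ab by simp
  then show "b \<bullet> dir a b > 0" unfolding dir_def using n by (simp add: divide_neg_pos mult_neg_neg)
qed

lemma dir_dot:
  assumes ab: "a \<times> b \<noteq> 0"
  shows "dir a b \<bullet> dir b a = - ((a \<bullet> b) / (norm a * norm b))"
proof -
  have a: "a \<noteq> 0" and b: "b \<noteq> 0" using ab by auto
  have ba: "b \<times> a \<noteq> 0" using ab cross_skew[of b a] by auto
  have nba: "norm (b \<times> a) = norm (a \<times> b)" using cross_skew[of b a] by simp
  have "(a \<times> (a \<times> b)) \<bullet> (b \<times> (b \<times> a)) = (a \<bullet> b) * ((a \<times> b) \<bullet> (b \<times> a)) - (a \<bullet> (b \<times> a)) * ((a \<times> b) \<bullet> b)"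
    by (rule dot_cross)
  also have "\<dots> = - (a \<bullet> b) * (norm (a \<times> b))\<^sup>2"
    using cross_skew[of b a] by (simp add: dot_cross_self power2_norm_eq_inner)
  finally have e: "(a \<times> (a \<times> b)) \<bullet> (b \<times> (b \<times> a)) = - (a \<bullet> b) * (norm (a \<times> b))\<^sup>2" .
  have "dir a b \<bullet> dir b a = (a \<times> (a \<times> b)) \<bullet> (b \<times> (b \<times> a)) / (norm (a \<times> (a \<times> b)) * norm (b \<times> (b \<times> a)))"
    unfolding dir_def by simp
  also have "\<dots> = - (a \<bullet> b) * (norm (a \<times> b))\<^sup>2 / (norm a * norm b * (norm (a \<times> b))\<^sup>2)"
    unfolding e norm_aab nba by (simp add: power2_eq_square mult_ac)
  also have "\<dots> = - ((a \<bullet> b) / (norm a * norm b))" using ab by (simp add: field_simps power2_eq_square)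
  finally show ?thesis .
qed

lemma norm_cos_sin:
  assumes "norm v = 1" "norm u = 1" "u \<bullet> v = 0"
  shows "norm (cos s *\<^sub>R v + sin s *\<^sub>R u) = 1"
proof -
  have "(norm (cos s *\<^sub>R v + sin s *\<^sub>R u))\<^sup>2 = (cos s)\<^sup>2 * (v \<bullet> v) + (sin s)\<^sup>2 * (u \<bullet> u) + 2 * cos s * sin s * (u \<bullet> v)"
    by (simp only: power2_norm_eq_inner) (simp add: inner_add_left inner_add_right inner_commute power2_eq_square algebra_simps)
  also have "\<dots> = 1" using assms by (simp add: dot_square_norm)
  finally show ?thesis using norm_ge_zero[of "cos s *\<^sub>R v + sin s *\<^sub>R u"] by (auto simp add: power2_eq_1_iff)
qed

lemma vtx_par:
  assumes g: "gp M" and ij: "i < 4" "j < 4" "i \<noteq> j" and v: "norm v = 1" "M i \<bullet> v = 0" "M j \<bullet> v = 0"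
  obtains \<alpha> where "v = \<alpha> *\<^sub>R (M i \<times> M j)" "\<alpha> \<noteq> 0"
proof -
  have c: "M i \<times> M j \<noteq> 0" using gp_cross[OF g ij] .
  define \<alpha> where "\<alpha> = (v \<bullet> (M i \<times> M j)) / ((M i \<times> M j) \<bullet> (M i \<times> M j))"
  have "v = \<alpha> *\<^sub>R (M i \<times> M j)" unfolding \<alpha>_def using v c by (intro par_cross) (auto simp: inner_commute)
  moreover have "\<alpha> \<noteq> 0" using v calculation by auto
  ultimately show ?thesis using that by blast
qed

lemma sd_unique:
  assumes g: "gp M" and C: "\<forall>i<4. C i = {x \<in> sphere 0 1. M i \<bullet> x = 0}"
    and clF: "closure F = {x \<in> sphere 0 1. \<forall>i<4. M i \<bullet> x \<ge> 0}"
    and ij: "i < 4" "j < 4" "i \<noteq> j" and v: "norm v = 1" "M i \<bullet> v = 0" "M j \<bullet> v = 0"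
    and sd: "side_dir C F v i u"
  shows "u = dir (M i) (M j)"
proof -
  obtain e where u1: "norm u = 1" and uv: "u \<bullet> v = 0" and e: "e > 0"
    and H: "\<And>s. 0 < s \<Longrightarrow> s < e \<Longrightarrow> cos s *\<^sub>R v + sin s *\<^sub>R u \<in> C i \<inter> closure F"
    using sd unfolding side_dir_def by blast
  define s0 where "s0 = min (e/2) 1"
  have s0: "0 < s0" "s0 < e" "s0 \<le> 1" unfolding s0_def using e by auto
  have sin0: "sin s0 > 0" using s0 pi_gt3 by (intro sin_gt_zero) auto
  have P: "cos s0 *\<^sub>R v + sin s0 *\<^sub>R u \<in> C i \<inter> closure F" using H s0 by simp
  have "M i \<bullet> (cos s0 *\<^sub>R v + sin s0 *\<^sub>R u) = 0" using P C ij by auto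
  then have "sin s0 * (M i \<bullet> u) = 0" using v by (simp add: inner_add_right)
  then have Miu: "M i \<bullet> u = 0" using sin0 by simp
  have "M j \<bullet> (cos s0 *\<^sub>R v + sin s0 *\<^sub>R u) \<ge> 0" using P clF ij by auto
  then have "sin s0 * (M j \<bullet> u) \<ge> 0" using v by (simp add: inner_add_right)
  then have Mju: "M j \<bullet> u \<ge> 0" using sin0 by (simp add: zero_le_mult_iff)
  let ?c = "M i \<times> M j"
  have c: "?c \<noteq> 0" using gp_cross[OF g ij] .
  obtain \<alpha> where va: "v = \<alpha> *\<^sub>R ?c" "\<alpha> \<noteq> 0" using vtx_par[OF g ij v] .
  have uc: "u \<bullet> ?c = 0" using uv va by simp
  let ?W = "M i \<times> ?c"
  have W: "?W \<noteq> 0" using dir_props(5)[OF c] .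
  define \<beta> where "\<beta> = (u \<bullet> ?W) / (?W \<bullet> ?W)"
  have ub: "u = \<beta> *\<^sub>R ?W" unfolding \<beta>_def using Miu uc W by (intro par_cross) (auto simp: inner_commute)
  have nb: "\<bar>\<beta>\<bar> * norm ?W = 1" using u1 ub by simp
  have "M j \<bullet> dir (M i) (M j) > 0" using dir_props(4)[OF c] .
  then have MjW: "M j \<bullet> ?W < 0" unfolding dir_def using W
    by (simp add: divide_neg_pos mult_neg_neg zero_less_mult_iff) (auto simp: divide_less_0_iff)
  have "\<beta> * (M j \<bullet> ?W) \<ge> 0" using Mju ub by simp
  then have "\<beta> \<le> 0" using MjW by (simp add: zero_le_mult_iff)
  then have "\<beta> = - 1 / norm ?W" using nb W by (simp add: field_simps)
  then show ?thesis unfolding dir_def ub by simp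
qed

lemma sd_exists:
  assumes g: "gp M" and C: "\<forall>i<4. C i = {x \<in> sphere 0 1. M i \<bullet> x = 0}"
    and clF: "closure F = {x \<in> sphere 0 1. \<forall>i<4. M i \<bullet> x \<ge> 0}"
    and ij: "i < 4" "j < 4" "i \<noteq> j" and v: "norm v = 1" "M i \<bullet> v = 0" "M j \<bullet> v = 0"
    and vk: "\<forall>k<4. k \<noteq> i \<and> k \<noteq> j \<longrightarrow> M k \<bullet> v > 0"
  shows "side_dir C F v i (dir (M i) (M j))"
proof -
  let ?u = "dir (M i) (M j)"
  let ?c = "M i \<times> M j"
  have c: "?c \<noteq> 0" using gp_cross[OF g ij] .
  obtain \<alpha> where va: "v = \<alpha> *\<^sub>R ?c" "\<alpha> \<noteq> 0" using vtx_par[OF g ij v] .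
  have u1: "norm ?u = 1" and Miu: "M i \<bullet> ?u = 0" and cu: "?c \<bullet> ?u = 0" and Mju: "M j \<bullet> ?u > 0"
    using dir_props[OF c] by auto
  have uv: "?u \<bullet> v = 0" using cu va by (simp add: inner_commute)
  let ?p = "\<lambda>s. cos s *\<^sub>R v + sin s *\<^sub>R ?u"
  have ev: "\<forall>k\<in>{..<4}. eventually (\<lambda>s. M k \<bullet> ?p s \<ge> 0) (at_right 0)"
  proof
    fix k assume k: "k \<in> {..<(4::nat)}"
    show "eventually (\<lambda>s. M k \<bullet> ?p s \<ge> 0) (at_right 0)"
    proof (cases "k = i \<or> k = j")
      case True
      then have "M k \<bullet> v = 0" "M k \<bullet> ?u \<ge> 0" using v Miu Mju by auto
      moreover have "eventually (\<lambda>s::real. 0 < s \<and> s < 1) (at_right 0)"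
        unfolding eventually_at_right_field by (intro exI[of _ 1]) auto
      ultimately show ?thesis
      proof (elim eventually_mono)
        fix s :: real assume "M k \<bullet> v = 0" "M k \<bullet> ?u \<ge> 0" and s: "0 < s \<and> s < 1"
        then have "sin s \<ge> 0" using pi_gt3 by (intro sin_ge_zero) auto
        then show "M k \<bullet> ?p s \<ge> 0" using \<open>M k \<bullet> v = 0\<close> \<open>M k \<bullet> ?u \<ge> 0\<close>
          by (simp add: inner_add_right)
      qed
    next
      case False
      then have pos: "M k \<bullet> v > 0" using vk k by auto
      have "((\<lambda>s. cos s * (M k \<bullet> v) + sin s * (M k \<bullet> ?u)) \<longlongrightarrow> cos 0 * (M k \<bullet> v) + sin 0 * (M k \<bullet> ?u)) (at_right 0)"
        by (intro tendsto_intros)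
      then have "((\<lambda>s. cos s * (M k \<bullet> v) + sin s * (M k \<bullet> ?u)) \<longlongrightarrow> M k \<bullet> v) (at_right 0)" by simp
      from order_tendstoD(1)[OF this pos]
      show ?thesis by (rule eventually_mono) (simp add: inner_add_right)
    qed
  qed
  have "eventually (\<lambda>s. \<forall>k\<in>{..<4}. M k \<bullet> ?p s \<ge> 0) (at_right 0)"
    by (rule eventually_ball_finite[OF _ ev]) simp
  then obtain b where b: "b > 0" and bH: "\<And>s. 0 < s \<Longrightarrow> s < b \<Longrightarrow> \<forall>k\<in>{..<4}. M k \<bullet> ?p s \<ge> 0"
    unfolding eventually_at_right_field by auto
  have "\<forall>s. 0 < s \<and> s < b \<longrightarrow> ?p s \<in> C i \<inter> closure F"
  proof (intro allI impI)
    fix s assume s: "0 < s \<and> s < b"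
    have n: "norm (?p s) = 1" using norm_cos_sin[OF v(1) u1 uv] .
    have "M i \<bullet> ?p s = 0" using v Miu by (simp add: inner_add_right)
    then have "?p s \<in> C i" using C ij n by auto
    moreover have "?p s \<in> closure F" using bH[of s] s n unfolding clF by auto
    ultimately show "?p s \<in> C i \<inter> closure F" by blast
  qed
  moreover have "v \<in> C i" using C ij v by auto
  ultimately show ?thesis unfolding side_dir_def using u1 uv b by blast
qed

lemma angle_at_vertex:
  assumes g: "gp M" and C: "\<forall>i<4. C i = {x \<in> sphere 0 1. M i \<bullet> x = 0}"
    and clF: "closure F = {x \<in> sphere 0 1. \<forall>i<4. M i \<bullet> x \<ge> 0}"
    and ij: "i < 4" "j < 4" "i \<noteq> j" and v: "norm v = 1" "M i \<bullet> v = 0" "M j \<bullet> v = 0"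
    and vk: "\<forall>k<4. k \<noteq> i \<and> k \<noteq> j \<longrightarrow> M k \<bullet> v > 0"
  shows "interior_angle C F v = pi - ang (M i) (M j)"
proof -
  have ji: "j < 4" "i < 4" "j \<noteq> i" using ij by auto
  have vk': "\<forall>k<4. k \<noteq> j \<and> k \<noteq> i \<longrightarrow> M k \<bullet> v > 0" using vk by blast
  have idx: "i' = i \<or> i' = j" if "i' < 4" "side_dir C F v i' u" for i' u
  proof -
    have "v \<in> C i'" using that(2) unfolding side_dir_def by blast
    then have "M i' \<bullet> v = 0" using C that(1) by auto
    then show ?thesis using vk that(1) by force
  qed
  have c: "M i \<times> M j \<noteq> 0" using gp_cross[OF g ij] .
  have dd: "arccos (dir (M i) (M j) \<bullet> dir (M j) (M i)) = pi - ang (M i) (M j)"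
    unfolding dir_dot[OF c] ang_def using cs_bounds[of "M i" "M j"] by (simp add: arccos_minus)
  have S1: "side_dir C F v i (dir (M i) (M j))" by (rule sd_exists[OF g C clF ij v vk])
  have S2: "side_dir C F v j (dir (M j) (M i))" by (rule sd_exists[OF g C clF ji v(1,3,2) vk'])
  show ?thesis
    unfolding interior_angle_def
  proof (rule the_equality)
    show "\<exists>i'<4. \<exists>j'<4. \<exists>u w. i' \<noteq> j' \<and> side_dir C F v i' u \<and> side_dir C F v j' w \<and>
        pi - ang (M i) (M j) = arccos (u \<bullet> w)"
      using ij S1 S2 dd by metis
  next
    fix \<theta> assume "\<exists>i'<4. \<exists>j'<4. \<exists>u w. i' \<noteq> j' \<and> side_dir C F v i' u \<and> side_dir C F v j' w \<and>
        \<theta> = arccos (u \<bullet> w)"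
    then obtain i' j' u w where H: "i' < 4" "j' < 4" "i' \<noteq> j'" "side_dir C F v i' u" "side_dir C F v j' w"
      "\<theta> = arccos (u \<bullet> w)" by blast
    have "(i' = i \<and> j' = j) \<or> (i' = j \<and> j' = i)" using idx[OF H(1,4)] idx[OF H(2,5)] H(3) by auto
    then show "\<theta> = pi - ang (M i) (M j)"
    proof
      assume "i' = i \<and> j' = j"
      then have "u = dir (M i) (M j)" "w = dir (M j) (M i)"
        using sd_unique[OF g C clF ij v] sd_unique[OF g C clF ji v(1,3,2)] H by auto
      then show ?thesis using H(6) dd by simp
    next
      assume "i' = j \<and> j' = i"
      then have "w = dir (M i) (M j)" "u = dir (M j) (M i)"
        using sd_unique[OF g C clF ij v] sd_unique[OF g C clF ji v(1,3,2)] H by auto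
      then show ?thesis using H(6) dd by (simp add: inner_commute)
    qed
  qed
qed

lemma all_less_4: "(\<forall>p<(4::nat). Q p) \<longleftrightarrow> Q 0 \<and> Q 1 \<and> Q 2 \<and> Q 3"
  by (auto simp: less_Suc_eq eval_nat_numeral)

lemma less_4_cases: "(j::nat) < 4 \<longleftrightarrow> j = 0 \<or> j = 1 \<or> j = 2 \<or> j = 3"
  by auto

lemma few_contra:
  assumes "inj_on P {..<(4::nat)}" "\<forall>k<4. P k \<in> set qs" "length qs < 4"
  shows False
proof -
  have "card (P ` {..<4}) = 4" using assms(1) by (simp add: card_image)
  moreover have "P ` {..<4} \<subseteq> set qs" using assms(2) by auto
  then have "card (P ` {..<4}) \<le> card (set qs)" by (intro card_mono) auto
  moreover have "card (set qs) \<le> length qs" by (rule card_length)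
  ultimately show False using assms(3) by simp
qed

lemma final_quad:
  fixes A :: "nat \<times> nat \<Rightarrow> real" and P :: "nat \<Rightarrow> nat \<times> nat" and a :: "nat \<Rightarrow> real"
  assumes inj: "inj_on P {..<4}" and Pq: "\<forall>k<4. P k \<in> set qs" and dq: "distinct qs" and lq: "length qs = 4"
    and a: "\<forall>k<4. a k = 1 - A (P k) / pi"
    and Ab: "\<forall>q\<in>set qs. 0 < A q \<and> A q < pi"
    and S: "sum_list (map A qs) < 2 * pi"
    and S2: "\<forall>q\<in>set qs. 2 * A q < sum_list (map A qs)"
  shows "(\<forall>k<4. 0 < a k \<and> a k < 1) \<and>
         0 < a 0 + a 1 + a 2 + a 3 - 2 \<and>
         a 0 + a 1 + a 2 + a 3 - 2 < 2 * Min (a ` {..<4})"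
proof -
  have cP: "card (P ` {..<4}) = 4" using inj by (simp add: card_image)
  have sub: "P ` {..<4} \<subseteq> set qs" using Pq by auto
  have cq: "card (set qs) = 4" using dq lq by (simp add: distinct_card)
  have eq: "P ` {..<4} = set qs" using sub cP cq by (intro card_subset_eq) auto
  have "(\<Sum>k<4. A (P k)) = (\<Sum>q\<in>P ` {..<4}. A q)" using inj by (simp add: sum.reindex)
  also have "\<dots> = sum_list (map A qs)" unfolding eq using dq by (simp add: sum.distinct_set_conv_list)
  finally have sA: "(\<Sum>k<4. A (P k)) = sum_list (map A qs)" .
  define S where "S = sum_list (map A qs)"
  have "a 0 + a 1 + a 2 + a 3 = (\<Sum>k<4. a k)" by (simp add: eval_nat_numeral)
  also have "\<dots> = (\<Sum>k<4. 1 - A (P k) / pi)" using a by (intro sum.cong) auto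
  also have "\<dots> = 4 - (\<Sum>k<4. A (P k)) / pi" by (simp add: sum_subtractf sum_divide_distrib)
  finally have sa: "a 0 + a 1 + a 2 + a 3 = 4 - S / pi" using sA S_def by simp
  have Ak: "0 < A (P k) \<and> A (P k) < pi \<and> 2 * A (P k) < S" if "k < 4" for k
    using Ab S2 Pq that S_def by auto
  have ak: "0 < a k \<and> a k < 1" if "k < 4" for k
  proof -
    have "A (P k) / pi < 1" "0 < A (P k) / pi" using Ak[OF that] pi_gt_zero by (simp_all add: field_simps)
    then show ?thesis using a that by auto
  qed
  have "0 < 2 - S / pi" using S S_def pi_gt_zero by (simp add: field_simps)
  moreover have "2 - S / pi < 2 * a k" if "k < 4" for k
  proof -
    have ek: "a k = 1 - A (P k) / pi" using a that by blast
    show ?thesis using ek Ak[OF that] pi_gt_zero by (simp add: field_simps)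
  qed
  then have "2 - S / pi < 2 * Min (a ` {..<4})"
  proof -
    assume h: "\<And>k. k < 4 \<Longrightarrow> 2 - S / pi < 2 * a k"
    have "\<forall>x\<in>a ` {..<4}. (2 - S / pi) / 2 < x" using h by (auto simp: field_simps)
    then have "(2 - S / pi) / 2 < Min (a ` {..<4})" by (subst Min_gr_iff) (auto simp: lessThan_empty_iff)
    then show ?thesis by (simp del: Min_gr_iff add: field_simps)
  qed
  ultimately show ?thesis using ak sa by simp
qed

lemma quad_gp:
  assumes g: "gp M" and p: "p1 < 4" "p2 < 4" "p3 < 4" "p4 < 4"
    and d: "p1 \<noteq> p2" "p1 \<noteq> p3" "p1 \<noteq> p4" "p2 \<noteq> p3" "p2 \<noteq> p4" "p3 \<noteq> p4"
    and pos: "l1 > 0" "l2 > 0" "m3 > 0" "m4 > 0"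
    and rel: "l1 *\<^sub>R M p1 + l2 *\<^sub>R M p2 = m3 *\<^sub>R M p3 + m4 *\<^sub>R M p4"
  shows "ang (M p1) (M p3) + ang (M p1) (M p4) + ang (M p2) (M p3) + ang (M p2) (M p4) < 2 * pi"
    and "2 * ang (M p1) (M p3) < ang (M p1) (M p3) + ang (M p1) (M p4) + ang (M p2) (M p3) + ang (M p2) (M p4)"
    and "2 * ang (M p1) (M p4) < ang (M p1) (M p3) + ang (M p1) (M p4) + ang (M p2) (M p3) + ang (M p2) (M p4)"
    and "2 * ang (M p2) (M p3) < ang (M p1) (M p3) + ang (M p1) (M p4) + ang (M p2) (M p3) + ang (M p2) (M p4)"
    and "2 * ang (M p2) (M p4) < ang (M p1) (M p3) + ang (M p1) (M p4) + ang (M p2) (M p3) + ang (M p2) (M p4)"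
proof -
  have t: "(M x \<times> M y) \<bullet> M z \<noteq> 0" if "x \<in> {p1,p2,p3,p4}" "y \<in> {p1,p2,p3,p4}" "z \<in> {p1,p2,p3,p4}"
    "x \<noteq> y" "y \<noteq> z" "x \<noteq> z" for x y z
    using that p by (intro gpD[OF g]) auto
  have r2: "l1 *\<^sub>R M p1 + l2 *\<^sub>R M p2 = m4 *\<^sub>R M p4 + m3 *\<^sub>R M p3" using rel by (simp add: add.commute)
  have r3: "l2 *\<^sub>R M p2 + l1 *\<^sub>R M p1 = m3 *\<^sub>R M p3 + m4 *\<^sub>R M p4" using rel by (simp add: add.commute)
  have r4: "l2 *\<^sub>R M p2 + l1 *\<^sub>R M p1 = m4 *\<^sub>R M p4 + m3 *\<^sub>R M p3" using rel by (simp add: add.commute)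
  note Q1 = quad_ineq[OF t t t t pos rel]
  note Q2 = quad_ineq[OF t t t t pos(1,2,4,3) r2]
  note Q3 = quad_ineq[OF t t t t pos(2,1,3,4) r3]
  note Q4 = quad_ineq[OF t t t t pos(2,1,4,3) r4]
  show "ang (M p1) (M p3) + ang (M p1) (M p4) + ang (M p2) (M p3) + ang (M p2) (M p4) < 2 * pi"
    using Q1(1) d by simp
  show "2 * ang (M p1) (M p3) < ang (M p1) (M p3) + ang (M p1) (M p4) + ang (M p2) (M p3) + ang (M p2) (M p4)"
    using Q1(2) d by simp
  show "2 * ang (M p1) (M p4) < ang (M p1) (M p3) + ang (M p1) (M p4) + ang (M p2) (M p3) + ang (M p2) (M p4)"
    using Q2(2) d by simp
  show "2 * ang (M p2) (M p3) < ang (M p1) (M p3) + ang (M p1) (M p4) + ang (M p2) (M p3) + ang (M p2) (M p4)"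
    using Q3(2) d by simp
  show "2 * ang (M p2) (M p4) < ang (M p1) (M p3) + ang (M p1) (M p4) + ang (M p2) (M p3) + ang (M p2) (M p4)"
    using Q4(2) d by simp
qed

definition good :: "(nat \<Rightarrow> real) \<Rightarrow> nat \<Rightarrow> nat \<Rightarrow> bool" where
  "good L i j \<longleftrightarrow> (\<forall>p<4. \<forall>q<4. p \<noteq> i \<and> p \<noteq> j \<and> q \<noteq> i \<and> q \<noteq> j \<and> p \<noteq> q \<longrightarrow> L p * L q < 0)"

lemma pairs6: "(i::nat) < j \<Longrightarrow> j < 4 \<Longrightarrow>
  (i = 0 \<and> j = 1) \<or> (i = 0 \<and> j = 2) \<or> (i = 0 \<and> j = 3) \<or> (i = 1 \<and> j = 2) \<or> (i = 1 \<and> j = 3) \<or> (i = 2 \<and> j = 3)"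
  by auto

lemma rel_move:
  fixes x y z w :: "real^3"
  assumes "x + y + z + w = 0"
  shows "x + y = - z + - w" "x + z = - y + - w" "x + w = - y + - z"
proof -
  have "x + y = (x + y + z + w) + (- z + - w)" by (simp add: algebra_simps)
  then show "x + y = - z + - w" using assms by simp
  have "x + z = (x + y + z + w) + (- y + - w)" by (simp add: algebra_simps)
  then show "x + z = - y + - w" using assms by simp
  have "x + w = (x + y + z + w) + (- y + - z)" by (simp add: algebra_simps)
  then show "x + w = - y + - z" using assms by simp
qed

lemma good6:
  "good L 0 1 \<longleftrightarrow> L 2 * L 3 < 0" "good L 0 2 \<longleftrightarrow> L 1 * L 3 < 0" "good L 0 3 \<longleftrightarrow> L 1 * L 2 < 0"
  "good L 1 2 \<longleftrightarrow> L 0 * L 3 < 0" "good L 1 3 \<longleftrightarrow> L 0 * L 2 < 0" "good L 2 3 \<longleftrightarrow> L 0 * L 1 < 0"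
  unfolding good_def all_less_4 by (auto simp: mult.commute)

lemma prod_neg_iff: "(x::real) \<noteq> 0 \<Longrightarrow> y \<noteq> 0 \<Longrightarrow> (x * y < 0) \<longleftrightarrow> ((0 < x) \<noteq> (0 < y))"
  by (auto simp: mult_less_0_iff)

lemma good6s:
  assumes "L 0 \<noteq> 0" "L 1 \<noteq> 0" "L 2 \<noteq> 0" "L 3 \<noteq> 0"
  shows "good L 0 1 \<longleftrightarrow> ((0 < L 2) \<noteq> (0 < L 3))" "good L 0 2 \<longleftrightarrow> ((0 < L 1) \<noteq> (0 < L 3))"
    "good L 0 3 \<longleftrightarrow> ((0 < L 1) \<noteq> (0 < L 2))" "good L 1 2 \<longleftrightarrow> ((0 < L 0) \<noteq> (0 < L 3))"
    "good L 1 3 \<longleftrightarrow> ((0 < L 0) \<noteq> (0 < L 2))" "good L 2 3 \<longleftrightarrow> ((0 < L 0) \<noteq> (0 < L 1))"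
  unfolding good6 using assms by (simp_all add: prod_neg_iff)

lemma combi_pos:
  fixes M :: "nat \<Rightarrow> real^3" and L :: "nat \<Rightarrow> real" and P :: "nat \<Rightarrow> nat \<times> nat" and a :: "nat \<Rightarrow> real"
  assumes g: "gp M" and rel: "L 0 *\<^sub>R M 0 + L 1 *\<^sub>R M 1 + L 2 *\<^sub>R M 2 + L 3 *\<^sub>R M 3 = 0"
    and L0: "L 0 > 0" and nz: "L 1 \<noteq> 0" "L 2 \<noteq> 0" "L 3 \<noteq> 0"
    and inj: "inj_on P {..<4}"
    and PG: "\<forall>k<4. fst (P k) < snd (P k) \<and> snd (P k) < 4 \<and> good L (fst (P k)) (snd (P k))"
    and a: "\<forall>k<4. a k = 1 - ang (M (fst (P k))) (M (snd (P k))) / pi"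
  shows "(\<forall>k<4. 0 < a k \<and> a k < 1) \<and>
         0 < a 0 + a 1 + a 2 + a 3 - 2 \<and>
         a 0 + a 1 + a 2 + a 3 - 2 < 2 * Min (a ` {..<4})"
proof -
  define A where "A = (\<lambda>q::nat\<times>nat. ang (M (fst q)) (M (snd q)))"
  have a': "\<forall>k<4. a k = 1 - A (P k) / pi" using a unfolding A_def by simp
  have memq: "\<forall>k<4. P k \<in> set qs" if H: "\<And>i j. i < j \<Longrightarrow> j < 4 \<Longrightarrow> good L i j \<Longrightarrow> (i, j) \<in> set qs" for qs
  proof (intro allI impI)
    fix k :: nat assume "k < 4"
    then have "fst (P k) < snd (P k)" "snd (P k) < 4" "good L (fst (P k)) (snd (P k))" using PG by auto
    then have "(fst (P k), snd (P k)) \<in> set qs" by (rule H)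
    then show "P k \<in> set qs" by simp
  qed
  have Apos: "0 < A (x, y) \<and> A (x, y) < pi" if "x < 4" "y < 4" "x \<noteq> y" for x y
    using ang_pos[OF gp_cross[OF g that]] unfolding A_def by simp
  have L00: "L 0 \<noteq> 0" using L0 by simp
  note G = good6s[OF L00 nz]
  have L1: "L 1 > 0 \<or> L 1 < 0" and L2: "L 2 > 0 \<or> L 2 < 0" and L3: "L 3 > 0 \<or> L 3 < 0" using nz by auto
  show ?thesis
  proof (cases "L 1 > 0")
    case T1: True
    show ?thesis
    proof (cases "L 2 > 0")
      case T2: True
      show ?thesis
      proof (cases "L 3 > 0")
        case T3: True
        have "\<forall>k<4. P k \<in> set []"
          by (rule memq, drule (1) pairs6) (use L0 T1 T2 T3 in \<open>auto simp: G G[unfolded One_nat_def]\<close>)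
        then show ?thesis using few_contra[OF inj] by fastforce
      next
        case N3: False
        then have F3: "L 3 < 0" using L3 by simp
        have "\<forall>k<4. P k \<in> set [(0,1),(0,2),(1,2)]"
          by (rule memq, drule (1) pairs6) (use L0 T1 T2 N3 in \<open>auto simp: G G[unfolded One_nat_def]\<close>)
        then show ?thesis using few_contra[OF inj] by fastforce
      qed
    next
      case N2: False
      then have F2: "L 2 < 0" using L2 by simp
      show ?thesis
      proof (cases "L 3 > 0")
        case T3: True
        have "\<forall>k<4. P k \<in> set [(0,1),(0,3),(1,3)]"
          by (rule memq, drule (1) pairs6) (use L0 T1 N2 T3 in \<open>auto simp: G G[unfolded One_nat_def]\<close>)
        then show ?thesis using few_contra[OF inj] by fastforce
      next
        case N3: False
        then have F3: "L 3 < 0" using L3 by simp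
        let ?qs = "[(0,2),(0,3),(1,2),(1,3)] :: (nat \<times> nat) list"
        have Pq: "\<forall>k<4. P k \<in> set ?qs"
          by (rule memq, drule (1) pairs6) (use L0 T1 N2 N3 in \<open>auto simp: G G[unfolded One_nat_def]\<close>)
        have r: "L 0 *\<^sub>R M 0 + L 1 *\<^sub>R M 1 = (- L 2) *\<^sub>R M 2 + (- L 3) *\<^sub>R M 3"
          using rel_move(1)[OF rel] by simp
        note Q = quad_gp[OF g _ _ _ _ _ _ _ _ _ _ L0 T1 _ _ r, simplified]
        show ?thesis
        proof (rule final_quad[OF inj Pq _ _ a'])
          show "\<forall>q\<in>set ?qs. 0 < A q \<and> A q < pi" using Apos by simp
          show "sum_list (map A ?qs) < 2 * pi" using Q(1) F2 F3 unfolding A_def by simp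
          show "\<forall>q\<in>set ?qs. 2 * A q < sum_list (map A ?qs)" using Q(2-5) F2 F3 unfolding A_def by simp
        qed simp_all
      qed
    qed
  next
    case N1: False
    then have F1: "L 1 < 0" using L1 by simp
    show ?thesis
    proof (cases "L 2 > 0")
      case T2: True
      show ?thesis
      proof (cases "L 3 > 0")
        case T3: True
        have "\<forall>k<4. P k \<in> set [(0,2),(0,3),(2,3)]"
          by (rule memq, drule (1) pairs6) (use L0 N1 T2 T3 in \<open>auto simp: G G[unfolded One_nat_def]\<close>)
        then show ?thesis using few_contra[OF inj] by fastforce
      next
        case N3: False
        then have F3: "L 3 < 0" using L3 by simp
        let ?qs = "[(0,1),(0,3),(1,2),(2,3)] :: (nat \<times> nat) list"
        have Pq: "\<forall>k<4. P k \<in> set ?qs"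
          by (rule memq, drule (1) pairs6) (use L0 N1 T2 N3 in \<open>auto simp: G G[unfolded One_nat_def]\<close>)
        have r: "L 0 *\<^sub>R M 0 + L 2 *\<^sub>R M 2 = (- L 1) *\<^sub>R M 1 + (- L 3) *\<^sub>R M 3"
          using rel_move(2)[OF rel] by simp
        note Q = quad_gp[OF g _ _ _ _ _ _ _ _ _ _ L0 T2 _ _ r, simplified]
        have s12: "ang (M 2) (M 1) = ang (M 1) (M 2)" by (rule ang_sym)
        show ?thesis
        proof (rule final_quad[OF inj Pq _ _ a'])
          show "\<forall>q\<in>set ?qs. 0 < A q \<and> A q < pi" using Apos by simp
          show "sum_list (map A ?qs) < 2 * pi" using Q(1) F1 F3 s12 unfolding A_def by simp
          show "\<forall>q\<in>set ?qs. 2 * A q < sum_list (map A ?qs)" using Q(2-5) F1 F3 s12 unfolding A_def by simp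
        qed simp_all
      qed
    next
      case N2: False
      then have F2: "L 2 < 0" using L2 by simp
      show ?thesis
      proof (cases "L 3 > 0")
        case T3: True
        let ?qs = "[(0,1),(0,2),(1,3),(2,3)] :: (nat \<times> nat) list"
        have Pq: "\<forall>k<4. P k \<in> set ?qs"
          by (rule memq, drule (1) pairs6) (use L0 N1 N2 T3 in \<open>auto simp: G G[unfolded One_nat_def]\<close>)
        have r: "L 0 *\<^sub>R M 0 + L 3 *\<^sub>R M 3 = (- L 1) *\<^sub>R M 1 + (- L 2) *\<^sub>R M 2"
          using rel_move(3)[OF rel] by simp
        note Q = quad_gp[OF g _ _ _ _ _ _ _ _ _ _ L0 T3 _ _ r, simplified]
        have s13: "ang (M 3) (M 1) = ang (M 1) (M 3)" by (rule ang_sym)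
        have s23: "ang (M 3) (M 2) = ang (M 2) (M 3)" by (rule ang_sym)
        show ?thesis
        proof (rule final_quad[OF inj Pq _ _ a'])
          show "\<forall>q\<in>set ?qs. 0 < A q \<and> A q < pi" using Apos by simp
          show "sum_list (map A ?qs) < 2 * pi" using Q(1) F1 F2 s13 s23 unfolding A_def by simp
          show "\<forall>q\<in>set ?qs. 2 * A q < sum_list (map A ?qs)" using Q(2-5) F1 F2 s13 s23 unfolding A_def by simp
        qed simp_all
      next
        case N3: False
        then have F3: "L 3 < 0" using L3 by simp
        have "\<forall>k<4. P k \<in> set [(1,2),(1,3),(2,3)]"
          by (rule memq, drule (1) pairs6) (use L0 N1 N2 N3 in \<open>auto simp: G G[unfolded One_nat_def]\<close>)
        then show ?thesis using few_contra[OF inj] by fastforce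
      qed
    qed
  qed
qed

lemma combi:
  fixes M :: "nat \<Rightarrow> real^3" and L :: "nat \<Rightarrow> real" and P :: "nat \<Rightarrow> nat \<times> nat" and a :: "nat \<Rightarrow> real"
  assumes g: "gp M" and rel: "L 0 *\<^sub>R M 0 + L 1 *\<^sub>R M 1 + L 2 *\<^sub>R M 2 + L 3 *\<^sub>R M 3 = 0"
    and nz: "L 0 \<noteq> 0" "L 1 \<noteq> 0" "L 2 \<noteq> 0" "L 3 \<noteq> 0"
    and inj: "inj_on P {..<4}"
    and PG: "\<forall>k<4. fst (P k) < snd (P k) \<and> snd (P k) < 4 \<and> good L (fst (P k)) (snd (P k))"
    and a: "\<forall>k<4. a k = 1 - ang (M (fst (P k))) (M (snd (P k))) / pi"
  shows "(\<forall>k<4. 0 < a k \<and> a k < 1) \<and>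
         0 < a 0 + a 1 + a 2 + a 3 - 2 \<and>
         a 0 + a 1 + a 2 + a 3 - 2 < 2 * Min (a ` {..<4})"
proof (cases "L 0 > 0")
  case True
  show ?thesis using combi_pos[OF g rel True nz(2-4) inj PG a] .
next
  case False
  then have L0: "(\<lambda>k. - L k) 0 > 0" using nz by simp
  have rel': "(\<lambda>k. - L k) 0 *\<^sub>R M 0 + (\<lambda>k. - L k) 1 *\<^sub>R M 1 + (\<lambda>k. - L k) 2 *\<^sub>R M 2 + (\<lambda>k. - L k) 3 *\<^sub>R M 3 = 0"
  proof -
    have "(\<lambda>k. - L k) 0 *\<^sub>R M 0 + (\<lambda>k. - L k) 1 *\<^sub>R M 1 + (\<lambda>k. - L k) 2 *\<^sub>R M 2 + (\<lambda>k. - L k) 3 *\<^sub>R M 3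
       = - (L 0 *\<^sub>R M 0 + L 1 *\<^sub>R M 1 + L 2 *\<^sub>R M 2 + L 3 *\<^sub>R M 3)" by (simp add: algebra_simps)
    then show ?thesis by (simp only: rel minus_zero)
  qed
  have gg: "good (\<lambda>k. - L k) i j = good L i j" for i j unfolding good_def by simp
  show ?thesis using combi_pos[OF g rel' L0 _ _ _ inj _ a] nz PG by (simp add: gg)
qed

lemma rel4: "((b \<times> c) \<bullet> d) *\<^sub>R a - ((a \<times> c) \<bullet> d) *\<^sub>R b + ((a \<times> b) \<bullet> d) *\<^sub>R c - ((a \<times> b) \<bullet> c) *\<^sub>R d = 0"
  unfolding vec_eq_iff forall_3 by (simp add: cross3_simps)

lemma third_index: "(i::nat) < 4 \<Longrightarrow> j < 4 \<Longrightarrow> \<exists>m<4. m \<noteq> i \<and> m \<noteq> j"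
proof -
  assume "i < 4" "j < 4"
  consider "0 \<noteq> i \<and> 0 \<noteq> j" | "1 \<noteq> i \<and> 1 \<noteq> j" | "2 \<noteq> i \<and> 2 \<noteq> j" by fastforce
  then show ?thesis by cases (auto intro: exI[of _ 0] exI[of _ 1] exI[of _ 2])
qed

lemma sum_four:
  fixes i j p q :: nat
  assumes "i < 4" "j < 4" "p < 4" "q < 4" "i \<noteq> j" "i \<noteq> p" "i \<noteq> q" "j \<noteq> p" "j \<noteq> q" "p \<noteq> q"
  shows "f 0 + f 1 + f 2 + f 3 = f i + f j + f p + (f q :: real)"
proof -
  have c: "card {i, j, p, q} = 4" using assms by simp
  have "{i, j, p, q} = {..<4}" using assms c by (intro card_subset_eq) auto
  then have "(\<Sum>m<4. f m) = (\<Sum>m\<in>{i, j, p, q}. f m)" by simp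
  also have "\<dots> = f i + f j + f p + f q" using assms by (simp add: add.assoc)
  finally show ?thesis by (simp add: eval_nat_numeral add.assoc)
qed

theorem proposition5p2:
  fixes C :: "nat \<Rightarrow> (real^3) set" and F :: "(real^3) set"
    and v :: "nat \<Rightarrow> real^3" and a :: "nat \<Rightarrow> real"
  assumes "general_position4 C"
    and "F \<in> faces C"
    and "face_vertices C F = v ` {..<4}" and "inj_on v {..<4}"
    and "\<forall>k<4. \<exists>i<4. v k \<in> C i \<and> v ((k + 1) mod 4) \<in> C i"
    and "\<forall>k<4. pi * a k = interior_angle C F (v k)"
  shows "(\<forall>k<4. 0 < a k \<and> a k < 1) \<and>
         0 < a 0 + a 1 + a 2 + a 3 - 2 \<and>
         a 0 + a 1 + a 2 + a 3 - 2 < 2 * Min (a ` {..<4})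
       \<and> {p :: real^4. (\<forall>i. 0 < p$i \<and> p$i < 1) \<and>
             0 < (\<Sum>i\<in>UNIV. p$i) - 2 \<and> (\<Sum>i\<in>UNIV. p$i) - 2 < 2 * Min (range (\<lambda>i. p$i))}
         = interior (convex hull {vector [1,1,1,1], vector [0,0,1,1], vector [0,1,0,1],
             vector [0,1,1,0], vector [1,0,0,1], vector [1,0,1,0], vector [1,1,0,0]})
       \<and> convex {p :: real^4. (\<forall>i. 0 < p$i \<and> p$i < 1) \<and>
             0 < (\<Sum>i\<in>UNIV. p$i) - 2 \<and> (\<Sum>i\<in>UNIV. p$i) - 2 < 2 * Min (range (\<lambda>i. p$i))}"
proof -
  have gc: "\<forall>i<4. great_circle (C i)" and injC: "inj_on C {..<4}"
    and tri: "\<forall>i<4. \<forall>j<4. \<forall>k<4. i \<noteq> j \<and> j \<noteq> k \<and> i \<noteq> k \<longrightarrow> C i \<inter> C j \<inter> C k = {}"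
    using assms(1) unfolding general_position4_def by auto
  have "\<forall>i. \<exists>n. i < 4 \<longrightarrow> n \<noteq> 0 \<and> C i = {x \<in> sphere 0 1. n \<bullet> x = 0}"
    using gc unfolding great_circle_def by blast
  then obtain N where N: "\<And>i. i < 4 \<Longrightarrow> N i \<noteq> 0 \<and> C i = {x \<in> sphere 0 1. N i \<bullet> x = 0}" by metis
  have gpN: "gp N"
    unfolding gp_def
  proof (intro allI impI)
    fix i j k :: nat assume ijk: "i < 4" "j < 4" "k < 4" "i \<noteq> j \<and> j \<noteq> k \<and> i \<noteq> k"
    show "(N i \<times> N j) \<bullet> N k \<noteq> 0"
    proof
      assume z: "(N i \<times> N j) \<bullet> N k = 0"
      show False
      proof (cases "N i \<times> N j = 0")
        case True
        have "C i = C j"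
          using N[OF ijk(1)] N[OF ijk(2)] same_normal[OF True] by (auto simp: inner_commute)
        then show False using injC ijk unfolding inj_on_def by auto
      next
        case False
        let ?c = "N i \<times> N j"
        let ?x = "(1 / norm ?c) *\<^sub>R ?c"
        have nx: "norm ?x = 1" using False by simp
        have "N i \<bullet> ?x = 0" "N j \<bullet> ?x = 0" by (simp_all add: dot_cross_self)
        moreover have "N k \<bullet> ?x = 0" using z by (simp add: inner_commute)
        ultimately have "?x \<in> C i \<inter> C j \<inter> C k" using N ijk nx by auto
        then show False using tri ijk by blast
      qed
    qed
  qed
  from assms(2) obtain x0 where x0: "x0 \<in> sphere 0 1 - (\<Union>i<4. C i)"
    and Fx0: "F = connected_component_set (sphere 0 1 - (\<Union>i<4. C i)) x0"
    unfolding faces_def components_iff by blast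
  have nx0: "N i \<bullet> x0 \<noteq> 0" if "i < 4" for i using x0 N[OF that] that by auto
  define \<sigma> where "\<sigma> = (\<lambda>i. if N i \<bullet> x0 > 0 then 1 else - 1 :: real)"
  define M where "M = (\<lambda>i. \<sigma> i *\<^sub>R N i)"
  have s0: "\<sigma> i \<noteq> 0" for i unfolding \<sigma>_def by simp
  have Mx0: "\<forall>i<4. M i \<bullet> x0 > 0"
  proof (intro allI impI)
    fix i :: nat assume "i < 4"
    then have "N i \<bullet> x0 \<noteq> 0" by (rule nx0)
    then show "M i \<bullet> x0 > 0" unfolding M_def \<sigma>_def by auto
  qed
  have CM: "\<forall>i<4. C i = {x \<in> sphere 0 1. M i \<bullet> x = 0}" using N s0 unfolding M_def by auto
  have gpM: "gp M" unfolding gp_def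
  proof (intro allI impI)
    fix i j k :: nat assume ijk: "i < 4" "j < 4" "k < 4" "i \<noteq> j \<and> j \<noteq> k \<and> i \<noteq> k"
    have "(M i \<times> M j) \<bullet> M k = \<sigma> i * \<sigma> j * \<sigma> k * ((N i \<times> N j) \<bullet> N k)"
      unfolding M_def by (simp add: cross_mult_left cross_mult_right)
    then show "(M i \<times> M j) \<bullet> M k \<noteq> 0" using gpD[OF gpN ijk(1-3)] ijk(4) s0 by simp
  qed
  have FU: "F = {x \<in> sphere 0 1. \<forall>i<4. M i \<bullet> x > 0}"
    using face_char[OF CM _ Mx0 Fx0] x0 by simp
  have x0F: "x0 \<in> F" using FU x0 Mx0 by simp
  have clF: "closure F = {x \<in> sphere 0 1. \<forall>i<4. M i \<bullet> x \<ge> 0}" by (rule closure_char[OF FU x0F])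
  define L where "L = (\<lambda>k::nat. if k = 0 then (M 1 \<times> M 2) \<bullet> M 3 else if k = 1 then - ((M 0 \<times> M 2) \<bullet> M 3)
     else if k = 2 then (M 0 \<times> M 1) \<bullet> M 3 else - ((M 0 \<times> M 1) \<bullet> M 2))"
  have rel: "L 0 *\<^sub>R M 0 + L 1 *\<^sub>R M 1 + L 2 *\<^sub>R M 2 + L 3 *\<^sub>R M 3 = 0"
    using rel4[of "M 1" "M 2" "M 3" "M 0"] unfolding L_def by (simp add: algebra_simps)
  have Lnz: "L 0 \<noteq> 0" "L 1 \<noteq> 0" "L 2 \<noteq> 0" "L 3 \<noteq> 0"
    unfolding L_def using gpD[OF gpM] by auto
  have relv: "L 0 * (M 0 \<bullet> x) + L 1 * (M 1 \<bullet> x) + L 2 * (M 2 \<bullet> x) + L 3 * (M 3 \<bullet> x) = 0" for x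
  proof -
    have "(L 0 *\<^sub>R M 0 + L 1 *\<^sub>R M 1 + L 2 *\<^sub>R M 2 + L 3 *\<^sub>R M 3) \<bullet> x = 0" using rel by simp
    then show ?thesis by (simp add: inner_add_left)
  qed
  have "\<forall>k. \<exists>ij. k < 4 \<longrightarrow> fst ij < snd ij \<and> snd ij < 4 \<and> v k \<in> C (fst ij) \<and> v k \<in> C (snd ij) \<and> v k \<in> closure F"
  proof (intro allI)
    fix k show "\<exists>ij. k < 4 \<longrightarrow> fst ij < snd ij \<and> snd ij < 4 \<and> v k \<in> C (fst ij) \<and> v k \<in> C (snd ij) \<and> v k \<in> closure F"
    proof (cases "k < 4")
      case True
      then have "v k \<in> face_vertices C F" using assms(3) by auto
      then obtain i j where ij: "i < 4" "j < 4" "i \<noteq> j" "v k \<in> C i" "v k \<in> C j" "v k \<in> closure F"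
        unfolding face_vertices_def by blast
      show ?thesis
      proof (cases "i < j")
        case True then show ?thesis using ij by (intro exI[of _ "(i, j)"]) auto
      next
        case False then show ?thesis using ij by (intro exI[of _ "(j, i)"]) auto
      qed
    qed auto
  qed
  then obtain P where P: "\<And>k. k < 4 \<Longrightarrow> fst (P k) < snd (P k) \<and> snd (P k) < 4 \<and> v k \<in> C (fst (P k)) \<and> v k \<in> C (snd (P k)) \<and> v k \<in> closure F"
    by metis
  have vfacts: "norm (v k) = 1 \<and> M (fst (P k)) \<bullet> v k = 0 \<and> M (snd (P k)) \<bullet> v k = 0 \<and>
      (\<forall>m<4. m \<noteq> fst (P k) \<and> m \<noteq> snd (P k) \<longrightarrow> M m \<bullet> v k > 0)" if k: "k < 4" for k
  proof -
    note Pk = P[OF k]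
    have cl: "norm (v k) = 1 \<and> (\<forall>m<4. M m \<bullet> v k \<ge> 0)" using Pk clF by auto
    have z: "M (fst (P k)) \<bullet> v k = 0" "M (snd (P k)) \<bullet> v k = 0" using Pk CM by auto
    have "M m \<bullet> v k > 0" if m: "m < 4" "m \<noteq> fst (P k)" "m \<noteq> snd (P k)" for m
    proof -
      have "M m \<bullet> v k \<noteq> 0"
      proof
        assume "M m \<bullet> v k = 0"
        then have "v k \<in> C m" using CM m cl by auto
        then have "v k \<in> C (fst (P k)) \<inter> C (snd (P k)) \<inter> C m" using Pk by auto
        moreover have "C (fst (P k)) \<inter> C (snd (P k)) \<inter> C m = {}" using tri Pk m by (metis less_trans order_less_irrefl)
        ultimately show False by blast
      qed
      moreover have "M m \<bullet> v k \<ge> 0" using cl m(1) by blast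
      ultimately show ?thesis by simp
    qed
    then show ?thesis using cl z by blast
  qed
  have aP: "\<forall>k<4. a k = 1 - ang (M (fst (P k))) (M (snd (P k))) / pi"
  proof (intro allI impI)
    fix k :: nat assume k: "k < 4"
    have ij: "fst (P k) < 4" "snd (P k) < 4" "fst (P k) \<noteq> snd (P k)" using P[OF k] by auto
    have "interior_angle C F (v k) = pi - ang (M (fst (P k))) (M (snd (P k)))"
      using vfacts[OF k] by (intro angle_at_vertex[OF gpM CM clF ij]) auto
    then have "pi * a k = pi - ang (M (fst (P k))) (M (snd (P k)))" using assms(6) k by simp
    then show "a k = 1 - ang (M (fst (P k))) (M (snd (P k))) / pi" by (simp add: field_simps)
  qed
  have goodP: "good L (fst (P k)) (snd (P k))" if k: "k < 4" for k
    unfolding good_def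
  proof (intro allI impI)
    fix p q :: nat assume pq: "p < 4" "q < 4" "p \<noteq> fst (P k) \<and> p \<noteq> snd (P k) \<and> q \<noteq> fst (P k) \<and> q \<noteq> snd (P k) \<and> p \<noteq> q"
    let ?i = "fst (P k)" and ?j = "snd (P k)"
    note vf = vfacts[OF k]
    have ij: "?i < 4" "?j < 4" "?i < ?j" using P[OF k] by auto
    have "L 0 * (M 0 \<bullet> v k) + L 1 * (M 1 \<bullet> v k) + L 2 * (M 2 \<bullet> v k) + L 3 * (M 3 \<bullet> v k)
        = L ?i * (M ?i \<bullet> v k) + L ?j * (M ?j \<bullet> v k) + L p * (M p \<bullet> v k) + L q * (M q \<bullet> v k)"
      using ij pq by (intro sum_four[of _ _ _ _ "\<lambda>m. L m * (M m \<bullet> v k)"]) auto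
    then have e: "L p * (M p \<bullet> v k) + L q * (M q \<bullet> v k) = 0" using relv[of "v k"] vf by simp
    have xp: "M p \<bullet> v k > 0" and xq: "M q \<bullet> v k > 0" using vf pq by auto
    have "L p * L q * (M p \<bullet> v k) = - ((L q)\<^sup>2 * (M q \<bullet> v k))"
    proof -
      have "L q * (L p * (M p \<bullet> v k) + L q * (M q \<bullet> v k)) = 0" using e by simp
      then show ?thesis by (simp add: algebra_simps power2_eq_square)
    qed
    moreover have "(L q)\<^sup>2 * (M q \<bullet> v k) > 0" using Lnz pq xq
      by (intro mult_pos_pos) (auto simp: less_4_cases)
    ultimately have "L p * L q * (M p \<bullet> v k) < 0" by simp
    then show "L p * L q < 0" using xp by (simp add: mult_less_0_iff)
  qed
  have injP: "inj_on P {..<4}"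
  proof (rule inj_onI)
    fix k k' assume k: "k \<in> {..<4}" and k': "k' \<in> {..<4}" and e: "P k = P k'"
    have k4: "k < 4" "k' < 4" using k k' by auto
    have ij: "fst (P k) < 4" "snd (P k) < 4" "fst (P k) \<noteq> snd (P k)" using P[OF k4(1)] by auto
    obtain m where m: "m < 4" "m \<noteq> fst (P k)" "m \<noteq> snd (P k)" using third_index[OF ij(1,2)] by blast
    have "v k = v k'"
      using vtx_unique[OF gpM ij(1,2) m(1) ij(3)] vfacts[OF k4(1)] vfacts[OF k4(2)] e m by auto
    then show "k = k'" using assms(4) k k' unfolding inj_on_def by blast
  qed
  have part1: "(\<forall>k<4. 0 < a k \<and> a k < 1) \<and>
         0 < a 0 + a 1 + a 2 + a 3 - 2 \<and>
         a 0 + a 1 + a 2 + a 3 - 2 < 2 * Min (a ` {..<4})"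
    using P goodP by (intro combi[OF gpM rel Lnz injP _ aP]) auto
  show ?thesis using part1 part2 by blast
qed

end
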